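(* Let $M\in\mathbb N$ and let $X(M)$ be the subshift defined below. Then $$\zeta^+(X(M),z)=\frac{2}{1-4Mz+\sqrt{1-8Mz^2}}\quad\text{and}\quad\zeta^-(X(M),z)=\frac{2}{1-4z+\sqrt{1-8Mz^2}}.$$
   Context: Let $\Sigma_1=\{\lambda,\xi,\rho_1,\dots,\rho_M,\eta_1,\dots,\eta_M\}$. $\mathcal M_1(M)$ is the monoid with zero generated by $\Sigma_1$ and an identity $\mathbf 1$, subject only to the relations $\lambda\rho_i=\mathbf 1$, $\lambda\eta_i=0$, $\xi\eta_i=\mathbf 1$, $\xi\rho_i=0$ ($1\le i\le M$), $\mathbf 1$ is the identity and $0$ is absorbing; no other relations. $\mathit{red}:\Sigma_1^*\to\mathcal M_1(M)$ sends a word to the product of its letters (empty word to $\mathbf 1$). $X(M)=\{x\in\Sigma_1^{\mathbb Z}:\mathit{red}(x_i\cdots x_j)\neq 0\ \forall i\le j\}$ with shift $\sigma$. $\mathcal M_1^+$ is the submonoid generated by $\rho_i,\eta_i$ and $\mathcal M_1^-$ the submonoid generated by $\lambda,\xi$. Every block $\alpha$ can be written $\alpha=\alpha_+\alpha_-$ with $\mathit{red}(\alpha_+)\in\mathcal M_1^+$, $\mathit{red}(\alpha_-)\in\mathcal M_1^-$; its multiplier is $\mathit{red}(\alpha_-\alpha_+)$, called positive if in $\mathcal M_1^+\setminus\{\mathbf 1\}$, negative if in $\mathcal M_1^-\setminus\{\mathbf 1\}$, neutral if equal to $\mathbf 1$. The multiplier of an $n$-periodic point $x$ ($\sigma^nx=x$)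 is that of its block $x_0\cdots x_{n-1}$. $p_n^+(X(M))$ (resp. $p_n^-(X(M))$) is the number of $n$-periodic points whose multiplier is positive or neutral (resp. negative or neutral), and $\zeta^\pm(X(M),z)=\exp\sum_{n\ge1}\frac{p_n^\pm(X(M))}{n}z^n$. *)

theory Defs
  imports Complex_Main
begin

datatype sym = Lam | Xi | Rho nat | Eta nat

definition alphabet :: "nat \<Rightarrow> sym set" where
  "alphabet M = {Lam, Xi} \<union> Rho ` {1..M} \<union> Eta ` {1..M}"

definition pos_letters :: "nat \<Rightarrow> sym set" where
  "pos_letters M = Rho ` {1..M} \<union> Eta ` {1..M}"

definition neg_letters :: "sym set" where
  "neg_letters = {Lam, Xi}"

text \<open>The free monoid with zero on the letters: words (Some w) together with a
  zero element None; multiplication is concatenation, None is absorbing.\<close>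
fun fmult :: "sym list option \<Rightarrow> sym list option \<Rightarrow> sym list option" where
  "fmult (Some u) (Some v) = Some (u @ v)"
| "fmult _ _ = None"

inductive mcong :: "nat \<Rightarrow> sym list option \<Rightarrow> sym list option \<Rightarrow> bool" for M where
  refl: "mcong M a a"
| sym: "mcong M a b \<Longrightarrow> mcong M b a"
| trans: "mcong M a b \<Longrightarrow> mcong M b c \<Longrightarrow> mcong M a c"
| lam_rho: "i \<in> {1..M} \<Longrightarrow> mcong M (Some [Lam, Rho i]) (Some [])"
| lam_eta: "i \<in> {1..M} \<Longrightarrow> mcong M (Some [Lam, Eta i]) None"
| xi_eta: "i \<in> {1..M} \<Longrightarrow> mcong M (Some [Xi, Eta i]) (Some [])"
| xi_rho: "i \<in> {1..M} \<Longrightarrow> mcong M (Some [Xi, Rho i]) None"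
| ctx_left: "mcong M a b \<Longrightarrow> mcong M (fmult c a) (fmult c b)"
| ctx_right: "mcong M a b \<Longrightarrow> mcong M (fmult a c) (fmult b c)"

definition mclass :: "nat \<Rightarrow> sym list option \<Rightarrow> sym list option set" where
  "mclass M a = {b. mcong M a b}"

definition mzero :: "nat \<Rightarrow> sym list option set" where
  "mzero M = mclass M None"

definition mone :: "nat \<Rightarrow> sym list option set" where
  "mone M = mclass M (Some [])"

definition red :: "nat \<Rightarrow> sym list \<Rightarrow> sym list option set" where
  "red M w = mclass M (Some w)"

definition Mplus :: "nat \<Rightarrow> sym list option set set" where
  "Mplus M = {red M u | u. set u \<subseteq> pos_letters M}"

definition Mminus :: "nat \<Rightarrow> sym list option set set" where
  "Mminus M = {red M v | v. set v \<subseteq> neg_letters}"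

definition XM :: "nat \<Rightarrow> (int \<Rightarrow> sym) set" where
  "XM M = {x. (\<forall>i. x i \<in> alphabet M) \<and>
              (\<forall>i j. i \<le> j \<longrightarrow> red M (map (\<lambda>k. x k) [i..j]) \<noteq> mzero M)}"

definition multiplier :: "nat \<Rightarrow> sym list \<Rightarrow> sym list option set" where
  "multiplier M \<alpha> =
     (let (ap, am) = (SOME (p, q). \<alpha> = p @ q \<and> red M p \<in> Mplus M \<and> red M q \<in> Mminus M)
      in red M (am @ ap))"

definition periodic :: "nat \<Rightarrow> (int \<Rightarrow> sym) \<Rightarrow> bool" where
  "periodic n x \<longleftrightarrow> (\<forall>k. x (k + int n) = x k)"

definition block :: "nat \<Rightarrow> (int \<Rightarrow> sym) \<Rightarrow> sym list" where
  "block n x = map (\<lambda>k. x (int k)) [0..<n]"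

definition is_pos_or_neutral :: "nat \<Rightarrow> sym list option set \<Rightarrow> bool" where
  "is_pos_or_neutral M m \<longleftrightarrow> m \<in> Mplus M - {mone M} \<or> m = mone M"

definition is_neg_or_neutral :: "nat \<Rightarrow> sym list option set \<Rightarrow> bool" where
  "is_neg_or_neutral M m \<longleftrightarrow> m \<in> Mminus M - {mone M} \<or> m = mone M"

definition p_plus :: "nat \<Rightarrow> nat \<Rightarrow> nat" where
  "p_plus M n = card {x \<in> XM M. periodic n x \<and> is_pos_or_neutral M (multiplier M (block n x))}"

definition p_minus :: "nat \<Rightarrow> nat \<Rightarrow> nat" where
  "p_minus M n = card {x \<in> XM M. periodic n x \<and> is_neg_or_neutral M (multiplier M (block n x))}"

definition zeta :: "(nat \<Rightarrow> nat) \<Rightarrow> complex \<Rightarrow> complex" where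
  "zeta p z = exp (\<Sum>n. of_nat (p (Suc n)) / of_nat (Suc n) * z ^ Suc n)"

end

theory Submission
  imports Defs "HOL-Analysis.Analysis"
begin

definition isO :: "sym \<Rightarrow> bool" where
  "isO c \<longleftrightarrow> c = Lam \<or> c = Xi"

definition closer :: "nat \<Rightarrow> sym \<Rightarrow> bool" where
  "closer M c \<longleftrightarrow> (\<exists>i\<in>{1..M}. c = Rho i \<or> c = Eta i)"

definition matches :: "nat \<Rightarrow> sym \<Rightarrow> sym \<Rightarrow> bool" where
  "matches M o' c \<longleftrightarrow> (\<exists>i\<in>{1..M}. (o' = Lam \<and> c = Rho i) \<or> (o' = Xi \<and> c = Eta i))"

fun stp :: "nat \<Rightarrow> sym list option \<Rightarrow> sym \<Rightarrow> sym list option" where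
  "stp M None c = None"
| "stp M (Some r) c = (if r \<noteq> [] \<and> isO (last r) \<and> closer M c then
      (if matches M (last r) c then Some (butlast r) else None) else Some (r @ [c]))"

lemma stp_push: assumes "\<not> (r \<noteq> [] \<and> isO (last r) \<and> closer M c)"
  shows "stp M (Some r) c = Some (r @ [c])"
  using assms by (simp only: stp.simps(2) if_False)

definition nf :: "nat \<Rightarrow> sym list \<Rightarrow> sym list option" where
  "nf M w = foldl (stp M) (Some []) w"

fun J :: "nat \<Rightarrow> sym list option \<Rightarrow> sym list option \<Rightarrow> sym list option" where
  "J M x None = None"
| "J M x (Some s) = foldl (stp M) x s"

fun NF :: "nat \<Rightarrow> sym list option \<Rightarrow> sym list option" where
  "NF M None = None"
| "NF M (Some w) = nf M w"

lemma foldl_None[simp]: "foldl (stp M) None w = None"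
  by (induction w) auto

lemma nf_snoc: "nf M (w @ [c]) = stp M (nf M w) c"
  by (simp add: nf_def)

lemma nf_Nil[simp]: "nf M [] = Some []" by (simp add: nf_def)

lemma foldl_join: "foldl (stp M) x w = J M x (nf M w)"
proof (induction w rule: rev_induct)
  case Nil
  then show ?case by (simp add: nf_def)
next
  case (snoc c w)
  have "foldl (stp M) x (w @ [c]) = stp M (J M x (nf M w)) c"
    using snoc by simp
  also have "\<dots> = J M x (stp M (nf M w) c)"
  proof (cases "nf M w")
    case None
    then show ?thesis by simp
  next
    case (Some s)
    show ?thesis
    proof (cases "s \<noteq> [] \<and> isO (last s) \<and> closer M c")
      case True
      then obtain s' o' where s: "s = s' @ [o']" by (metis append_butlast_last_id)
      have o': "isO o'" using True s by simp
      have "\<not> closer M o'" using o' by (auto simp: isO_def closer_def)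
      then show ?thesis using Some True s o'
        by (cases "foldl (stp M) x s'") auto
    next
      case False
      then show ?thesis using Some by auto
    qed
  qed
  finally show ?case by (simp add: nf_snoc)
qed

lemma nf_append: "nf M (u @ v) = J M (nf M u) (nf M v)"
proof -
  have "nf M (u @ v) = foldl (stp M) (nf M u) v" by (simp add: nf_def)
  also have "\<dots> = J M (nf M u) (nf M v)" by (rule foldl_join)
  finally show ?thesis .
qed

lemma J_None1[simp]: "J M None y = None"
  by (cases y) auto

lemma NF_fmult: "NF M (fmult a b) = J M (NF M a) (NF M b)"
  by (cases a; cases b) (auto simp: nf_append)

lemma mcong_sound: "mcong M a b \<Longrightarrow> NF M a = NF M b"
proof (induction rule: mcong.induct)
  case (ctx_left a b c)
  then show ?case by (simp add: NF_fmult)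
next
  case (ctx_right a b c)
  then show ?case by (simp add: NF_fmult)
qed (auto simp: nf_def isO_def closer_def matches_def)

lemma mcong_nf: "mcong M (Some w) (nf M w)"
proof (induction w rule: rev_induct)
  case Nil
  then show ?case by (simp add: mcong.refl)
next
  case (snoc c w)
  have 1: "mcong M (Some (w @ [c])) (fmult (nf M w) (Some [c]))"
    using mcong.ctx_right[OF snoc, of "Some [c]"] by simp
  show ?case
  proof (cases "nf M w")
    case None
    then show ?thesis using 1 by (simp add: nf_snoc)
  next
    case (Some s)
    show ?thesis
    proof (cases "s \<noteq> [] \<and> isO (last s) \<and> closer M c")
      case True
      then obtain s' o' where s: "s = s' @ [o']" by (metis append_butlast_last_id)
      have o': "isO o'" "closer M c" using True s by auto
      have 2: "mcong M (Some (s' @ [o', c])) (if matches M o' c then Some s' else None)"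
      proof -
        have "mcong M (Some [o', c]) (if matches M o' c then Some [] else None)"
          using o' by (auto simp: isO_def closer_def matches_def
              intro: mcong.lam_rho mcong.lam_eta mcong.xi_eta mcong.xi_rho)
        from mcong.ctx_left[OF this, of "Some s'"] show ?thesis by auto
      qed
      have "nf M (w @ [c]) = (if matches M o' c then Some s' else None)"
        using Some s o' by (simp add: nf_snoc)
      then show ?thesis using 1 2 Some s by (auto intro: mcong.trans)
    next
      case False
      then have "nf M (w @ [c]) = Some (s @ [c])" using Some by (metis nf_snoc stp.simps(2))
      then show ?thesis using 1 Some by simp
    qed
  qed
qed

lemma mcong_NF: "mcong M a (NF M a)"
  by (cases a) (auto simp: mcong_nf mcong.refl)

lemma mcong_iff: "mcong M a b \<longleftrightarrow> NF M a = NF M b"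
  by (metis mcong_sound mcong_NF mcong.sym mcong.trans)

lemma mclass_eq: "mclass M a = mclass M b \<longleftrightarrow> NF M a = NF M b"
proof
  assume "mclass M a = mclass M b"
  moreover have "a \<in> mclass M a" by (simp add: mclass_def mcong.refl)
  ultimately have "a \<in> mclass M b" by simp
  then show "NF M a = NF M b" by (simp add: mclass_def mcong_iff)
next
  assume "NF M a = NF M b"
  then show "mclass M a = mclass M b" by (simp add: mclass_def mcong_iff)
qed

lemma red_eq: "red M u = red M v \<longleftrightarrow> nf M u = nf M v"
  by (simp add: red_def mclass_eq)

lemma red_zero: "red M u = mzero M \<longleftrightarrow> nf M u = None"
  by (simp add: red_def mzero_def mclass_eq)

lemma red_one: "red M u = mone M \<longleftrightarrow> nf M u = Some []"
  by (simp add: red_def mone_def mclass_eq)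

lemma nf_noO: "\<forall>c\<in>set u. \<not> isO c \<Longrightarrow> nf M u = Some u"
  by (induction u rule: rev_induct) (auto simp: nf_snoc)

lemma nf_noC: "\<forall>c\<in>set u. \<not> closer M c \<Longrightarrow> nf M u = Some u"
  by (induction u rule: rev_induct) (auto simp: nf_snoc)

lemma pos_noO: "c \<in> pos_letters M \<Longrightarrow> \<not> isO c"
  by (auto simp: pos_letters_def isO_def)

lemma neg_noC: "c \<in> neg_letters \<Longrightarrow> \<not> closer M c"
  by (auto simp: neg_letters_def closer_def)

lemma Mplus_iff: "red M w \<in> Mplus M \<longleftrightarrow> (\<exists>s. nf M w = Some s \<and> set s \<subseteq> pos_letters M)"
proof -
  have "red M w \<in> Mplus M \<longleftrightarrow> (\<exists>u. set u \<subseteq> pos_letters M \<and> nf M w = nf M u)"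
    unfolding Mplus_def using red_eq by blast
  also have "\<dots> \<longleftrightarrow> (\<exists>s. nf M w = Some s \<and> set s \<subseteq> pos_letters M)"
    using nf_noO pos_noO by (metis subsetD)
  finally show ?thesis .
qed

lemma Mminus_iff: "red M w \<in> Mminus M \<longleftrightarrow> (\<exists>s. nf M w = Some s \<and> set s \<subseteq> neg_letters)"
proof -
  have "red M w \<in> Mminus M \<longleftrightarrow> (\<exists>u. set u \<subseteq> neg_letters \<and> nf M w = nf M u)"
    unfolding Mminus_def using red_eq by blast
  also have "\<dots> \<longleftrightarrow> (\<exists>s. nf M w = Some s \<and> set s \<subseteq> neg_letters)"
    using nf_noC neg_noC by (metis subsetD)
  finally show ?thesis .
qed

lemma alpha_cases: "c \<in> alphabet M \<Longrightarrow> isO c \<or> closer M c"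
  by (auto simp: alphabet_def isO_def closer_def)

lemma isO_not_closer: "isO c \<Longrightarrow> \<not> closer M c"
  by (auto simp: isO_def closer_def)

lemma pos_iff: "c \<in> pos_letters M \<longleftrightarrow> closer M c"
  by (auto simp: pos_letters_def closer_def)

lemma neg_iff: "c \<in> neg_letters \<longleftrightarrow> isO c"
  by (auto simp: neg_letters_def isO_def)

lemma nf_append_None1: "nf M u = None \<Longrightarrow> nf M (u @ v) = None"
  by (simp add: nf_append)

lemma nf_append_None2: "nf M v = None \<Longrightarrow> nf M (u @ v) = None"
  by (simp add: nf_append)

lemma nf_infix: "nf M (u @ v @ t) \<noteq> None \<Longrightarrow> nf M v \<noteq> None"
  using nf_append_None1 nf_append_None2 by metis

lemma foldl_push_O: "\<forall>c\<in>set N. isO c \<Longrightarrow> foldl (stp M) (Some P) N = Some (P @ N)"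
  by (induction N arbitrary: P) (auto simp: isO_not_closer)

lemma foldl_push_C: "\<forall>c\<in>set Q. closer M c \<Longrightarrow> \<forall>c\<in>set P. closer M c \<Longrightarrow>
   foldl (stp M) (Some P) Q = Some (P @ Q)"
proof (induction Q arbitrary: P)
  case Nil
  then show ?case by simp
next
  case (Cons c Q)
  have "\<not> (P \<noteq> [] \<and> isO (last P))" using Cons.prems(2) isO_not_closer
    by (metis last_in_set)
  then have "stp M (Some P) c = Some (P @ [c])" by auto
  then show ?case using Cons by auto
qed

lemma nf_PN: "\<forall>c\<in>set P. closer M c \<Longrightarrow> \<forall>c\<in>set N. isO c \<Longrightarrow> nf M (P @ N) = Some (P @ N)"
proof -
  assume a: "\<forall>c\<in>set P. closer M c" "\<forall>c\<in>set N. isO c"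
  have "nf M P = Some P" using nf_noO a(1) isO_not_closer by metis
  then show ?thesis using a by (simp add: nf_def foldl_push_O)
qed

lemma decomp_exists:
  "set w \<subseteq> alphabet M \<Longrightarrow> nf M w \<noteq> None \<Longrightarrow>
   \<exists>p q P N. w = p @ q \<and> nf M p = Some P \<and> nf M q = Some N \<and>
     (\<forall>c\<in>set P. closer M c) \<and> (\<forall>c\<in>set N. isO c)"
proof (induction w rule: rev_induct)
  case Nil
  then show ?case by (intro exI[of _ "[]"]) simp
next
  case (snoc c w)
  have "nf M w \<noteq> None" using snoc.prems(2) by (cases "nf M w") (auto simp: nf_snoc)
  with snoc obtain p q P N where H: "w = p @ q" "nf M p = Some P" "nf M q = Some N"
    "\<forall>c\<in>set P. closer M c" "\<forall>c\<in>set N. isO c" by auto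
  have nw: "nf M w = Some (P @ N)"
    using H by (simp add: nf_append foldl_push_O)
  have cA: "isO c \<or> closer M c" using snoc.prems(1) alpha_cases by auto
  show ?case
  proof (cases "isO c")
    case True
    have "nf M (q @ [c]) = Some (N @ [c])" using H True isO_not_closer by (simp add: nf_snoc)
    then show ?thesis using H True by (intro exI[of _ p] exI[of _ "q @ [c]"] exI[of _ P] exI[of _ "N @ [c]"]) auto
  next
    case False
    then have cc: "closer M c" using cA by auto
    show ?thesis
    proof (cases "N = []")
      case True
      have "\<not> (P \<noteq> [] \<and> isO (last P) \<and> closer M c)" using H(4) isO_not_closer by (metis last_in_set)
      from stp_push[OF this] have "nf M (w @ [c]) = Some (P @ [c])" using nw True by (simp add: nf_snoc)
      then show ?thesis using H cc
        by (intro exI[of _ "w @ [c]"] exI[of _ "[]"] exI[of _ "P @ [c]"] exI[of _ "[]"]) auto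
    next
      case False
      have lo: "isO (last N)" using H(5) False by auto
      have "nf M (w @ [c]) = stp M (Some (P @ N)) c" using nw by (simp add: nf_snoc)
      also have "\<dots> = (if matches M (last N) c then Some (butlast (P @ N)) else None)"
        using False lo cc by simp
      finally have m: "matches M (last N) c" using snoc.prems(2) by (auto split: if_splits)
      have "nf M (q @ [c]) = Some (butlast N)" using H(3) False lo cc m by (simp add: nf_snoc)
      moreover have "\<forall>c\<in>set (butlast N). isO c" using H(5) by (meson in_set_butlastD)
      ultimately show ?thesis using H
        by (intro exI[of _ p] exI[of _ "q @ [c]"] exI[of _ P] exI[of _ "butlast N"]) auto
    qed
  qed
qed

definition op :: "sym list \<Rightarrow> nat" where "op w = length (filter isO w)"
definition cl :: "nat \<Rightarrow> sym list \<Rightarrow> nat" where "cl M w = length (filter (closer M) w)"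

lemma count_inv: "nf M w = Some s \<Longrightarrow> int (cl M s) - int (op s) = int (cl M w) - int (op w)"
proof (induction w arbitrary: s rule: rev_induct)
  case Nil
  then show ?case by simp
next
  case (snoc c w)
  obtain r where r: "nf M w = Some r" using snoc.prems by (cases "nf M w") (auto simp: nf_snoc)
  have IH: "int (cl M r) - int (op r) = int (cl M w) - int (op w)" using snoc.IH r by simp
  show ?case
  proof (cases "r \<noteq> [] \<and> isO (last r) \<and> closer M c")
    case True
    then obtain r' o' where rr: "r = r' @ [o']" by (metis append_butlast_last_id)
    have "s = r'" using snoc.prems r True rr by (auto simp: nf_snoc split: if_splits)
    then show ?thesis using IH rr True isO_not_closer[of o' M] isO_not_closer[of c M]
      by (auto simp: op_def cl_def)
  next
    case False
    then have "s = r @ [c]" using snoc.prems r by (metis nf_snoc option.inject stp.simps(2))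
    then show ?thesis using IH by (auto simp: op_def cl_def)
  qed
qed

lemma foldl_NP: "\<forall>c\<in>set N. isO c \<Longrightarrow> \<forall>c\<in>set P. closer M c \<Longrightarrow> foldl (stp M) (Some N) P = Some r \<Longrightarrow>
   (length P \<le> length N \<longrightarrow> r = take (length N - length P) N) \<and>
   (length N \<le> length P \<longrightarrow> r = drop (length N) P)"
proof (induction P arbitrary: N)
  case Nil
  then show ?case by simp
next
  case (Cons c P)
  show ?case
  proof (cases "N = []")
    case True
    have "foldl (stp M) (Some []) (c # P) = Some (c # P)"
      using Cons.prems(2) foldl_push_C[of P M "[c]"] by simp
    then have "r = c # P" using Cons.prems(3) True by simp
    then show ?thesis using True by simp
  next
    case False
    have lo: "isO (last N)" using Cons.prems(1) False by auto
    have cc: "closer M c" using Cons.prems(2) by auto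
    have m: "matches M (last N) c"
    proof (rule ccontr)
      assume "\<not> matches M (last N) c"
      then have "stp M (Some N) c = None" using False lo cc by simp
      then show False using Cons.prems(3) by simp
    qed
    then have "stp M (Some N) c = Some (butlast N)" using False lo cc by simp
    then have f: "foldl (stp M) (Some (butlast N)) P = Some r" using Cons.prems(3) by simp
    have "\<forall>c\<in>set (butlast N). isO c" using Cons.prems(1) by (meson in_set_butlastD)
    moreover have "\<forall>c\<in>set P. closer M c" using Cons.prems(2) by simp
    ultimately have IH: "(length P \<le> length (butlast N) \<longrightarrow> r = take (length (butlast N) - length P) (butlast N)) \<and>
      (length (butlast N) \<le> length P \<longrightarrow> r = drop (length (butlast N)) P)"
      using Cons.IH[of "butlast N"] f \<open>\<forall>c\<in>set (butlast N). isO c\<close> by blast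
    have ln: "length (butlast N) = length N - 1" by simp
    show ?thesis
    proof (intro conjI impI)
      assume "length (c # P) \<le> length N"
      then have "r = take (length N - 1 - length P) (butlast N)" using IH ln by auto
      then show "r = take (length N - length (c # P)) N"
        by (simp add: butlast_conv_take)
    next
      assume "length N \<le> length (c # P)"
      then have "r = drop (length N - 1) P" using IH ln by auto
      then show "r = drop (length N) (c # P)" using False
        by (cases N) auto
    qed
  qed
qed

lemma cl_append[simp]: "cl M (u @ v) = cl M u + cl M v" by (simp add: cl_def)
lemma op_append[simp]: "op (u @ v) = op u + op v" by (simp add: op_def)

lemma split_char:
  assumes w: "w = p @ q" and nP: "nf M p = Some P" and nN: "nf M q = Some N"
    and P: "\<forall>c\<in>set P. closer M c" and N: "\<forall>c\<in>set N. isO c" and ww: "nf M (w @ w) \<noteq> None"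
  shows "(red M (q @ p) \<in> Mplus M \<longleftrightarrow> op w \<le> cl M w) \<and> (red M (q @ p) \<in> Mminus M \<longleftrightarrow> cl M w \<le> op w)"
proof -
  have "nf M (p @ (q @ p) @ q) \<noteq> None" using ww w by simp
  then have "nf M (q @ p) \<noteq> None" by (rule nf_infix)
  then obtain r where r: "nf M (q @ p) = Some r" by auto
  have f: "foldl (stp M) (Some N) P = Some r" using r nP nN by (simp add: nf_append)
  note R = foldl_NP[OF N P f]
  have cP: "cl M P = length P" "op P = 0" using P isO_not_closer
    by (auto simp: cl_def op_def filter_id_conv filter_empty_conv)
  have cN: "cl M N = 0" "op N = length N" using N isO_not_closer
    by (auto simp: cl_def op_def filter_id_conv filter_empty_conv)
  have e: "int (cl M w) - int (op w) = int (length P) - int (length N)"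
    using count_inv[OF nP] count_inv[OF nN] cP cN w by simp
  have rp: "red M (q @ p) \<in> Mplus M \<longleftrightarrow> set r \<subseteq> pos_letters M" using r Mplus_iff by simp
  have rm: "red M (q @ p) \<in> Mminus M \<longleftrightarrow> set r \<subseteq> neg_letters" using r Mminus_iff by simp
  show ?thesis
  proof (cases "length N \<le> length P")
    case True
    then have r1: "r = drop (length N) P" using R by simp
    then have "set r \<subseteq> pos_letters M" using P pos_iff by (auto dest: in_set_dropD)
    moreover have "set r \<subseteq> neg_letters \<longleftrightarrow> length N = length P"
    proof
      assume a: "set r \<subseteq> neg_letters"
      show "length N = length P"
      proof (rule ccontr)
        assume "length N \<noteq> length P"
        then have "r \<noteq> []" using r1 True by simp
        then obtain x where "x \<in> set r" by (meson list.set_sel(1))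
        then have "x \<in> set P" "isO x" using a r1 neg_iff by (auto dest: in_set_dropD)
        then show False using P isO_not_closer by blast
      qed
    next
      assume "length N = length P"
      then show "set r \<subseteq> neg_letters" using r1 by simp
    qed
    ultimately show ?thesis using rp rm e True by auto
  next
    case False
    then have r1: "r = take (length N - length P) N" using R by simp
    then have "set r \<subseteq> neg_letters" using N neg_iff by (auto dest: in_set_takeD)
    moreover have "\<not> set r \<subseteq> pos_letters M"
    proof
      assume a: "set r \<subseteq> pos_letters M"
      have "r \<noteq> []" using r1 False by (cases N) auto
      then obtain x where "x \<in> set r" by (meson list.set_sel(1))
      then have "x \<in> set N" "closer M x" using a r1 pos_iff by (auto dest: in_set_takeD)
      then show False using N isO_not_closer by blast
    qed
    ultimately show ?thesis using rp rm e False by auto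
  qed
qed

lemma mult_char:
  assumes A: "set w \<subseteq> alphabet M" and ww: "nf M (w @ w) \<noteq> None"
  shows "(multiplier M w \<in> Mplus M \<longleftrightarrow> op w \<le> cl M w) \<and> (multiplier M w \<in> Mminus M \<longleftrightarrow> cl M w \<le> op w)"
proof -
  have "nf M w \<noteq> None" using ww nf_append_None1 by metis
  from decomp_exists[OF A this] obtain p q P N where H: "w = p @ q" "nf M p = Some P" "nf M q = Some N"
     "\<forall>c\<in>set P. closer M c" "\<forall>c\<in>set N. isO c" by blast
  define Q where "Q = (\<lambda>(p, q). w = p @ q \<and> red M p \<in> Mplus M \<and> red M q \<in> Mminus M)"
  have "Q (p, q)" unfolding Q_def using H Mplus_iff Mminus_iff pos_iff neg_iff by auto
  then have "Q (SOME x. Q x)" by (rule someI)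
  moreover obtain ap am where apm: "(SOME x. Q x) = (ap, am)" by fastforce
  ultimately have Qa: "w = ap @ am" "red M ap \<in> Mplus M" "red M am \<in> Mminus M" unfolding Q_def by auto
  have mu: "multiplier M w = red M (am @ ap)"
    unfolding multiplier_def using apm unfolding Q_def by simp
  obtain P' where P': "nf M ap = Some P'" "set P' \<subseteq> pos_letters M" using Qa(2) Mplus_iff by auto
  obtain N' where N': "nf M am = Some N'" "set N' \<subseteq> neg_letters" using Qa(3) Mminus_iff by auto
  have "\<forall>c\<in>set P'. closer M c" "\<forall>c\<in>set N'. isO c" using P'(2) N'(2) pos_iff neg_iff by auto
  from split_char[OF Qa(1) P'(1) N'(1) this ww] show ?thesis unfolding mu .
qed

definition pw :: "sym list \<Rightarrow> nat \<Rightarrow> sym list" where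
  "pw w k = concat (replicate k w)"

definition cond :: "nat \<Rightarrow> sym list \<Rightarrow> bool" where
  "cond M w \<longleftrightarrow> (\<forall>k. nf M (pw w k) \<noteq> None)"

definition seg :: "(int \<Rightarrow> sym) \<Rightarrow> int \<Rightarrow> nat \<Rightarrow> sym list" where
  "seg x i L = map (\<lambda>k. x (i + int k)) [0..<L]"

lemma map_upto_seg: "map x [i..j] = seg x i (nat (j - i + 1))"
proof (rule nth_equalityI)
  show "length (map x [i..j]) = length (seg x i (nat (j - i + 1)))" by (simp add: seg_def)
  fix k assume "k < length (map x [i..j])"
  then show "map x [i..j] ! k = seg x i (nat (j - i + 1)) ! k" by (simp add: seg_def nth_upto)
qed

lemma seg_add: "seg x i (L1 + L2) = seg x i L1 @ seg x (i + int L1) L2"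
proof -
  have "[0..<L1 + L2] = [0..<L1] @ [L1..<L1 + L2]" using upt_add_eq_append[of 0 L1 L2] by simp
  moreover have "[L1..<L1 + L2] = map (\<lambda>k. k + L1) [0..<L2]"
    using map_add_upt[of L1 L2] by (simp add: add.commute)
  ultimately show ?thesis unfolding seg_def by (simp add: ac_simps)
qed

lemma periodic_nat: "periodic n x \<Longrightarrow> x (i + int n * int m) = x i"
proof (induction m arbitrary: i)
  case 0
  then show ?case by simp
next
  case (Suc m)
  have "x (i + int n * int (Suc m)) = x ((i + int n * int m) + int n)"
    by (simp add: algebra_simps)
  also have "\<dots> = x (i + int n * int m)" using Suc.prems by (simp add: periodic_def)
  finally show ?case using Suc by simp
qed

lemma periodic_int: "periodic n x \<Longrightarrow> x (i + int n * m) = x i"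
proof (cases "m \<ge> 0")
  case True
  assume p: "periodic n x"
  then show ?thesis using periodic_nat[OF p, of i "nat m"] True by simp
next
  case False
  assume p: "periodic n x"
  have e: "(i + int n * m) + int n * int (nat (- m)) = i" using False by (simp add: algebra_simps)
  from periodic_nat[OF p, of "i + int n * m" "nat (- m)"] show ?thesis unfolding e by simp
qed

lemma periodic_mod: "periodic n x \<Longrightarrow> x i = x (i mod int n)"
  using periodic_int[of n x "i mod int n" "i div int n"]
  by (metis add.commute mult.commute mult_div_mod_eq)

lemma seg_shift: assumes p: "periodic n x" shows "seg x (i + int n * m) L = seg x i L"
proof -
  have "x (i + int n * m + int k) = x (i + int k)" for k
    using periodic_int[OF p, of "i + int k" m] by (simp add: ac_simps)
  then show ?thesis by (simp add: seg_def)
qed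

lemma seg_block: "periodic n x \<Longrightarrow> seg x 0 (k * n) = pw (block n x) k"
proof (induction k)
  case 0
  then show ?case by (simp add: seg_def pw_def)
next
  case (Suc k)
  have "seg x 0 (Suc k * n) = seg x 0 (n + k * n)" by simp
  also have "\<dots> = seg x 0 n @ seg x (0 + int n) (k * n)" by (rule seg_add)
  also have "seg x (0 + int n) (k * n) = seg x 0 (k * n)"
    using seg_shift[OF Suc.prems, of 0 1] by simp
  also have "seg x 0 n = block n x" by (simp add: seg_def block_def)
  finally show ?case using Suc by (simp add: pw_def)
qed

lemma finite_alphabet: "finite (alphabet M)"
  by (simp add: alphabet_def)

lemma XM_iff:
  assumes n: "n > 0" and p: "periodic n x"
  shows "x \<in> XM M \<longleftrightarrow> set (block n x) \<subseteq> alphabet M \<and> cond M (block n x)"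
proof
  assume x: "x \<in> XM M"
  have "set (block n x) \<subseteq> alphabet M" using x by (auto simp: XM_def block_def)
  moreover have "cond M (block n x)"
    unfolding cond_def
  proof
    fix k
    show "nf M (pw (block n x) k) \<noteq> None"
    proof (cases "k = 0")
      case True
      then show ?thesis by (simp add: pw_def)
    next
      case False
      have "pw (block n x) k = seg x 0 (k * n)" using seg_block[OF p] by simp
      also have "\<dots> = map x [0..int (k * n) - 1]"
      proof -
        have kn: "nat (int (k * n) - 1 - 0 + 1) = k * n" by (metis nat_int of_nat_mult diff_add_cancel diff_zero)
        show ?thesis by (simp only: map_upto_seg kn)
      qed
      finally have e: "pw (block n x) k = map x [0..int (k * n) - 1]" .
      from x have "\<forall>i j. i \<le> j \<longrightarrow> red M (map x [i..j]) \<noteq> mzero M" by (simp add: XM_def)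
      moreover have "0 \<le> int (k * n) - 1" using False n by simp
      ultimately have "red M (map x [0..int (k * n) - 1]) \<noteq> mzero M" by blast
      then show ?thesis unfolding e red_zero .
    qed
  qed
  ultimately show "set (block n x) \<subseteq> alphabet M \<and> cond M (block n x)" by simp
next
  assume H: "set (block n x) \<subseteq> alphabet M \<and> cond M (block n x)"
  have xb: "x i = block n x ! nat (i mod int n)" for i
  proof -
    have "x i = x (i mod int n)" using periodic_mod[OF p] .
    moreover have "nat (i mod int n) < n" using n by (simp add: nat_less_iff)
    ultimately show ?thesis using n by (simp add: block_def)
  qed
  have letters: "x i \<in> alphabet M" for i
  proof -
    have "nat (i mod int n) < length (block n x)" using n by (simp add: block_def nat_less_iff)
    then show ?thesis using H xb[of i] by (metis nth_mem subsetD)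
  qed
  have segs: "nf M (seg x i L) \<noteq> None" for i L
  proof -
    define i0 where "i0 = nat (i mod int n)"
    have i0: "i0 < n" "int i0 = i mod int n" using n by (auto simp: i0_def nat_less_iff)
    have "seg x i L = seg x (int i0 + int n * (i div int n)) L"
      using i0(2) by (simp add: mult.commute)
    also have "\<dots> = seg x (int i0) L" by (rule seg_shift[OF p])
    finally have s1: "seg x i L = seg x (int i0) L" .
    define K where "K = L + 1"
    have "L \<le> L * n" using n by simp
    moreover have "K * n = L * n + n" unfolding K_def by simp
    ultimately have "i0 + L \<le> K * n" using i0(1) by linarith
    then obtain rest where rest: "K * n = i0 + L + rest" using le_Suc_ex by blast
    have "seg x 0 (K * n) = seg x 0 (i0 + L + rest)" using rest by simp
    also have "\<dots> = seg x 0 i0 @ seg x (int i0) L @ seg x (int i0 + int L) rest"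
      by (simp add: seg_add)
    finally have e: "seg x 0 (K * n) = seg x 0 i0 @ seg x (int i0) L @ seg x (int i0 + int L) rest" .
    have "nf M (seg x 0 (K * n)) \<noteq> None"
      using H seg_block[OF p, of K] by (simp add: cond_def)
    then have "nf M (seg x (int i0) L) \<noteq> None" unfolding e by (rule nf_infix)
    then show ?thesis using s1 by simp
  qed
  show "x \<in> XM M"
    unfolding XM_def
  proof (intro CollectI conjI allI impI)
    fix i show "x i \<in> alphabet M" by (rule letters)
  next
    fix i j :: int assume "i \<le> j"
    show "red M (map x [i..j]) \<noteq> mzero M"
      using segs by (simp add: red_zero map_upto_seg)
  qed
qed

lemma block_inj:
  assumes n: "n > 0" and px: "periodic n x" and py: "periodic n y" and b: "block n x = block n y"
  shows "x = y"
proof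
  fix i
  have k: "nat (i mod int n) < n" using n by (simp add: nat_less_iff)
  have "x i = x (i mod int n)" by (rule periodic_mod[OF px])
  also have "\<dots> = block n x ! nat (i mod int n)" using k n by (simp add: block_def)
  also have "\<dots> = block n y ! nat (i mod int n)" using b by simp
  also have "\<dots> = y (i mod int n)" using k n by (simp add: block_def)
  also have "\<dots> = y i" by (rule periodic_mod[OF py, symmetric])
  finally show "x i = y i" .
qed

lemma card_periodic:
  assumes n: "n > 0"
  shows "card {x \<in> XM M. periodic n x \<and> Pr (multiplier M (block n x))}
       = card {w. length w = n \<and> set w \<subseteq> alphabet M \<and> cond M w \<and> Pr (multiplier M w)}"
proof -
  let ?A = "{x \<in> XM M. periodic n x \<and> Pr (multiplier M (block n x))}"
  let ?B = "{w. length w = n \<and> set w \<subseteq> alphabet M \<and> cond M w \<and> Pr (multiplier M w)}"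
  have "inj_on (block n) ?A"
  proof (rule inj_onI)
    fix x y assume "x \<in> ?A" "y \<in> ?A" "block n x = block n y"
    then show "x = y" using block_inj[OF n, of x y] by blast
  qed
  moreover have "block n ` ?A = ?B"
  proof
    show "block n ` ?A \<subseteq> ?B"
    proof
      fix w assume "w \<in> block n ` ?A"
      then obtain x where x: "x \<in> ?A" "w = block n x" by blast
      have "length w = n" using x by (simp add: block_def)
      then show "w \<in> ?B" using x XM_iff[OF n, of x M] by simp
    qed
  next
    show "?B \<subseteq> block n ` ?A"
    proof
      fix w assume w: "w \<in> ?B"
      define x where "x = (\<lambda>i. w ! nat (i mod int n))"
      have px: "periodic n x" by (simp add: periodic_def x_def)
      have lw: "length w = n" using w by blast
      have bx: "block n x = w"
      proof (rule nth_equalityI)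
        show "length (block n x) = length w" using lw by (simp add: block_def)
        fix k assume "k < length (block n x)"
        then have k: "k < n" by (simp add: block_def)
        then have "int k mod int n = int k" by simp
        then show "block n x ! k = w ! k" using k by (simp add: block_def x_def)
      qed
      have "x \<in> XM M" using XM_iff[OF n px] w bx by simp
      then show "w \<in> block n ` ?A" using px bx w by (auto intro!: image_eqI[of _ _ x])
    qed
  qed
  ultimately show ?thesis using card_image by fastforce
qed

lemma pos_neutral_iff: "is_pos_or_neutral M m \<longleftrightarrow> m \<in> Mplus M"
proof -
  have "mone M \<in> Mplus M" unfolding Mplus_def mone_def red_def by auto
  then show ?thesis by (auto simp: is_pos_or_neutral_def)
qed

lemma neg_neutral_iff: "is_neg_or_neutral M m \<longleftrightarrow> m \<in> Mminus M"
proof -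
  have "mone M \<in> Mminus M" unfolding Mminus_def mone_def red_def by auto
  then show ?thesis by (auto simp: is_neg_or_neutral_def)
qed

lemma cond_ww: "cond M w \<Longrightarrow> nf M (w @ w) \<noteq> None"
proof -
  assume "cond M w"
  then have "nf M (pw w 2) \<noteq> None" unfolding cond_def by blast
  then show ?thesis by (simp add: pw_def numeral_2_eq_2)
qed

lemma p_plus_words:
  assumes n: "n > 0"
  shows "p_plus M n = card {w. length w = n \<and> set w \<subseteq> alphabet M \<and> cond M w \<and> op w \<le> cl M w}"
    (is "_ = card {w. ?P w}")
proof -
  have "p_plus M n = card {w. length w = n \<and> set w \<subseteq> alphabet M \<and> cond M w \<and> is_pos_or_neutral M (multiplier M w)}"
    unfolding p_plus_def by (rule card_periodic[OF n])
  also have "\<dots> = card {w. ?P w}"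
  proof (intro arg_cong[where f=card] Collect_cong)
    fix w
    show "(length w = n \<and> set w \<subseteq> alphabet M \<and> cond M w \<and> is_pos_or_neutral M (multiplier M w)) = ?P w"
      using mult_char[of w M] cond_ww[of M w] pos_neutral_iff[of M "multiplier M w"] by auto
  qed
  finally show ?thesis .
qed

lemma p_minus_words:
  assumes n: "n > 0"
  shows "p_minus M n = card {w. length w = n \<and> set w \<subseteq> alphabet M \<and> cond M w \<and> cl M w \<le> op w}"
    (is "_ = card {w. ?P w}")
proof -
  have "p_minus M n = card {w. length w = n \<and> set w \<subseteq> alphabet M \<and> cond M w \<and> is_neg_or_neutral M (multiplier M w)}"
    unfolding p_minus_def by (rule card_periodic[OF n])
  also have "\<dots> = card {w. ?P w}"
  proof (intro arg_cong[where f=card] Collect_cong)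
    fix w
    show "(length w = n \<and> set w \<subseteq> alphabet M \<and> cond M w \<and> is_neg_or_neutral M (multiplier M w)) = ?P w"
      using mult_char[of w M] cond_ww[of M w] neg_neutral_iff[of M "multiplier M w"] by auto
  qed
  finally show ?thesis .
qed

lemma pw_Cons: "pw (c # w) (Suc k) = c # pw (w @ [c]) k @ w"
  by (induction k) (auto simp: pw_def)

lemma pw_snoc: "pw (w @ [c]) (Suc k) = w @ pw (c # w) k @ [c]"
  by (induction k) (auto simp: pw_def)

lemma cond_rot: "cond M (rotate1 w) \<longleftrightarrow> cond M w"
proof (cases w)
  case Nil
  then show ?thesis by simp
next
  case (Cons c u)
  have 1: "cond M (c # u) \<Longrightarrow> cond M (u @ [c])"
    unfolding cond_def
  proof
    fix k assume "\<forall>k. nf M (pw (c # u) k) \<noteq> None"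
    then have "nf M ([c] @ pw (u @ [c]) k @ u) \<noteq> None" using pw_Cons[of c u k] by (metis append_Cons append_Nil)
    then show "nf M (pw (u @ [c]) k) \<noteq> None" by (rule nf_infix)
  qed
  have 2: "cond M (u @ [c]) \<Longrightarrow> cond M (c # u)"
    unfolding cond_def
  proof
    fix k assume "\<forall>k. nf M (pw (u @ [c]) k) \<noteq> None"
    then have "nf M (u @ pw (c # u) k @ [c]) \<noteq> None" using pw_snoc[of u c k] by metis
    then show "nf M (pw (c # u) k) \<noteq> None" by (rule nf_infix)
  qed
  show ?thesis using 1 2 Cons by auto
qed

lemma nf_remove:
  assumes o: "isO o'" and c: "closer M c"
  shows "nf M (u @ [o', c] @ v) = (if matches M o' c then nf M (u @ v) else None)"
proof -
  have uoc: "nf M (u @ [o', c]) = (if matches M o' c then nf M u else None)"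
  proof (cases "nf M u")
    case None
    have "nf M (u @ [o', c]) = J M (nf M u) (nf M [o', c])" by (rule nf_append)
    then show ?thesis using None by simp
  next
    case (Some r)
    have nc: "\<not> closer M o'" using o isO_not_closer by blast
    have a1: "nf M (u @ [o']) = Some (r @ [o'])"
      using Some stp_push[of r M o'] nc nf_snoc[of M u o'] by simp
    have a2: "stp M (Some (r @ [o'])) c = (if matches M o' c then Some r else None)"
      using o c by simp
    have "nf M (u @ [o', c]) = nf M ((u @ [o']) @ [c])" by simp
    also have "\<dots> = stp M (nf M (u @ [o'])) c" by (rule nf_snoc)
    finally show ?thesis using a1 a2 Some by simp
  qed
  have "nf M (u @ [o', c] @ v) = nf M ((u @ [o', c]) @ v)" by simp
  also have "\<dots> = J M (nf M (u @ [o', c])) (nf M v)" by (rule nf_append)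
  finally show ?thesis unfolding uoc by (simp add: nf_append)
qed

lemma pw_remove_match:
  assumes "isO o'" "closer M c" "matches M o' c"
  shows "nf M (pw (a @ [o', c] @ b) k) = nf M (pw (a @ b) k)"
proof (induction k)
  case 0
  then show ?case by (simp add: pw_def)
next
  case (Suc k)
  have "nf M (pw (a @ [o', c] @ b) (Suc k)) = nf M (a @ [o', c] @ (b @ pw (a @ [o', c] @ b) k))"
    by (simp add: pw_def)
  also have "\<dots> = nf M (a @ (b @ pw (a @ [o', c] @ b) k))"
    using nf_remove[OF assms(1,2)] assms(3) by simp
  also have "\<dots> = J M (nf M (a @ b)) (nf M (pw (a @ [o', c] @ b) k))"
    by (metis append_assoc nf_append)
  also have "\<dots> = J M (nf M (a @ b)) (nf M (pw (a @ b) k))" using Suc by simp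
  also have "\<dots> = nf M (pw (a @ b) (Suc k))"
  proof -
    have "pw (a @ b) (Suc k) = (a @ b) @ pw (a @ b) k" by (simp add: pw_def)
    then show ?thesis by (metis nf_append)
  qed
  finally show ?case .
qed

lemma cond_remove:
  assumes "isO o'" "closer M c"
  shows "cond M (a @ [o', c] @ b) \<longleftrightarrow> matches M o' c \<and> cond M (a @ b)"
proof (cases "matches M o' c")
  case True
  then show ?thesis using pw_remove_match[OF assms True] by (simp add: cond_def)
next
  case False
  have "nf M (pw (a @ [o', c] @ b) 1) = None"
    using nf_remove[OF assms, of a b] False by (simp add: pw_def)
  then show ?thesis using False by (auto simp: cond_def)
qed

lemma cond_allO: "\<forall>c\<in>set w. isO c \<Longrightarrow> cond M w"
proof -
  assume a: "\<forall>c\<in>set w. isO c"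
  have "\<forall>c\<in>set (pw w k). \<not> closer M c" for k using a isO_not_closer by (auto simp: pw_def)
  then show ?thesis using nf_noC by (simp add: cond_def)
qed

lemma cond_allC: "\<forall>c\<in>set w. \<not> isO c \<Longrightarrow> cond M w"
proof -
  assume a: "\<forall>c\<in>set w. \<not> isO c"
  have "\<forall>c\<in>set (pw w k). \<not> isO c" for k using a by (auto simp: pw_def)
  then show ?thesis using nf_noO by (simp add: cond_def)
qed

definition cnt :: "nat \<Rightarrow> bool list \<Rightarrow> nat" where
  "cnt M \<pi> = card {w. set w \<subseteq> alphabet M \<and> cond M w \<and> map isO w = \<pi>}"

lemma finite_words: "finite {w. set w \<subseteq> alphabet M \<and> P w \<and> map isO w = \<pi>}"
proof (rule finite_subset)
  show "{w. set w \<subseteq> alphabet M \<and> P w \<and> map isO w = \<pi>} \<subseteq> {xs. set xs \<subseteq> alphabet M \<and> length xs = length \<pi>}"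
    by auto
  show "finite {xs. set xs \<subseteq> alphabet M \<and> length xs = length \<pi>}"
    by (rule finite_lists_length_eq) (simp add: finite_alphabet)
qed

lemma cnt_rot: "cnt M (rotate1 \<pi>) = cnt M \<pi>"
proof -
  let ?A = "{w. set w \<subseteq> alphabet M \<and> cond M w \<and> map isO w = \<pi>}"
  let ?B = "{w. set w \<subseteq> alphabet M \<and> cond M w \<and> map isO w = rotate1 \<pi>}"
  have "rotate1 ` ?A = ?B"
  proof
    show "rotate1 ` ?A \<subseteq> ?B" using cond_rot by (auto simp: rotate1_map)
  next
    show "?B \<subseteq> rotate1 ` ?A"
    proof
      fix w' assume w': "w' \<in> ?B"
      show "w' \<in> rotate1 ` ?A"
      proof (cases \<pi>)
        case Nil
        then show ?thesis using w' by auto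
      next
        case (Cons p \<pi>')
        then have "map isO w' = \<pi>' @ [p]" using w' by simp
        then obtain u c where u: "w' = u @ [c]" "map isO u = \<pi>'" "isO c = p"
          by (auto simp: map_eq_append_conv)
        have "rotate1 (c # u) = w'" using u by simp
        moreover have "c # u \<in> ?A" using w' u Cons cond_rot[of M "c # u"] by auto
        ultimately show ?thesis by (metis image_eqI)
      qed
    qed
  qed
  moreover have "inj_on rotate1 ?A" by (meson inj_rotate1 inj_on_subset subset_UNIV)
  ultimately have "card ?B = card ?A" using card_image by fastforce
  then show ?thesis unfolding cnt_def .
qed

definition Pairs :: "nat \<Rightarrow> (sym \<times> sym) set" where
  "Pairs M = {(o', c). isO o' \<and> closer M c \<and> matches M o' c}"

lemma Pairs_eq: "Pairs M = (\<lambda>i. (Lam, Rho i)) ` {1..M} \<union> (\<lambda>i. (Xi, Eta i)) ` {1..M}"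
    by (auto simp: Pairs_def isO_def closer_def matches_def)

lemma card_Pairs: "card (Pairs M) = 2 * M"
proof -
  note e = Pairs_eq
  have "card ((\<lambda>i. (Lam, Rho i)) ` {1..M} \<union> (\<lambda>i. (Xi, Eta i)) ` {1..M}) = M + M"
    by (subst card_Un_disjoint) (auto simp: card_image inj_on_def)
  then show ?thesis using e by simp
qed

lemma finite_Pairs: "finite (Pairs M)"
  unfolding Pairs_eq by simp

lemma isO_alpha: "isO c \<Longrightarrow> c \<in> alphabet M"
  by (auto simp: isO_def alphabet_def)

lemma closer_alpha: "closer M c \<Longrightarrow> c \<in> alphabet M"
  by (auto simp: closer_def alphabet_def)

lemma cnt_pair: "cnt M (a @ [True, False] @ b) = 2 * M * cnt M (a @ b)"
proof -
  let ?T = "{w. set w \<subseteq> alphabet M \<and> cond M w \<and> map isO w = a @ b}"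
  let ?X = "{w. set w \<subseteq> alphabet M \<and> cond M w \<and> map isO w = a @ [True, False] @ b}"
  define f where "f = (\<lambda>(p :: sym \<times> sym, w :: sym list). take (length a) w @ [fst p, snd p] @ drop (length a) w)"
  have fin: "finite ?T" by (rule finite_words)
  have inj: "inj_on f (Pairs M \<times> ?T)"
  proof (rule inj_onI)
    fix x y assume x: "x \<in> Pairs M \<times> ?T" and y: "y \<in> Pairs M \<times> ?T" and e: "f x = f y"
    obtain p1 w1 p2 w2 where xy: "x = (p1, w1)" "y = (p2, w2)" by fastforce
    have m1: "map isO w1 = a @ b" and m2: "map isO w2 = a @ b" using x y xy by auto
    have l: "length w1 = length a + length b" "length w2 = length a + length b"
      using m1 m2 by (metis length_append length_map)+
    have lt: "length (take (length a) w1) = length (take (length a) w2)" using l by simp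
    have e2: "take (length a) w1 @ ([fst p1, snd p1] @ drop (length a) w1) =
              take (length a) w2 @ ([fst p2, snd p2] @ drop (length a) w2)"
      using e xy by (simp add: f_def)
    then have "take (length a) w1 = take (length a) w2"
      and r: "[fst p1, snd p1] @ drop (length a) w1 = [fst p2, snd p2] @ drop (length a) w2"
      using append_eq_append_conv[OF disjI1[OF lt]] by blast+
    moreover from r have "p1 = p2" "drop (length a) w1 = drop (length a) w2"
      by (auto simp: prod_eq_iff)
    ultimately have "w1 = w2" "p1 = p2" by (metis append_take_drop_id)+
    then show "x = y" using xy by simp
  qed
  have img: "f ` (Pairs M \<times> ?T) = ?X"
  proof
    show "f ` (Pairs M \<times> ?T) \<subseteq> ?X"
    proof
      fix v assume "v \<in> f ` (Pairs M \<times> ?T)"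
      then obtain o' c w where P: "(o', c) \<in> Pairs M" and w: "w \<in> ?T"
        and v: "v = take (length a) w @ [o', c] @ drop (length a) w"
        by (auto simp: f_def)
      have oc: "isO o'" "closer M c" "matches M o' c" using P by (auto simp: Pairs_def)
      have m: "map isO w = a @ b" using w by simp
      have "map isO (take (length a) w) = a" using m by (metis append_eq_conv_conj take_map)
      moreover have "map isO (drop (length a) w) = b" using m by (metis append_eq_conv_conj drop_map)
      ultimately have "map isO v = a @ [True, False] @ b" using v oc isO_not_closer by auto
      moreover have "set v \<subseteq> alphabet M" using v w oc isO_alpha closer_alpha
        by (auto dest: in_set_takeD in_set_dropD)
      moreover have "cond M v" using v w cond_remove[OF oc(1,2), of "take (length a) w" "drop (length a) w"] oc(3)
        by simp
      ultimately show "v \<in> ?X" by simp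
    qed
  next
    show "?X \<subseteq> f ` (Pairs M \<times> ?T)"
    proof
      fix v assume v: "v \<in> ?X"
      then have "map isO v = a @ [True, False] @ b" by simp
      then obtain u1 u2 where u: "v = u1 @ u2" "map isO u1 = a" "map isO u2 = [True, False] @ b"
        by (auto simp: map_eq_append_conv)
      then obtain o' c u3 where u3: "u2 = o' # c # u3" "isO o'" "\<not> isO c" "map isO u3 = b"
        by (auto simp: map_eq_Cons_conv)
      have vv: "v = u1 @ [o', c] @ u3" using u u3 by simp
      have cA: "c \<in> alphabet M" using v vv by auto
      have cc: "closer M c" using alpha_cases[OF cA] u3 by auto
      have cr: "cond M v" using v by simp
      then have mt: "matches M o' c" and cr2: "cond M (u1 @ u3)"
        using cond_remove[OF u3(2) cc] vv by auto
      have P: "(o', c) \<in> Pairs M" using u3 cc mt by (simp add: Pairs_def)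
      have T: "u1 @ u3 \<in> ?T" using v vv cr2 u u3 by auto
      have la: "length u1 = length a" using u by auto
      have fv: "f ((o', c), u1 @ u3) = v" using vv la by (simp add: f_def)
      show "v \<in> f ` (Pairs M \<times> ?T)"
      proof (rule image_eqI)
        show "v = f ((o', c), u1 @ u3)" using fv by simp
        show "((o', c), u1 @ u3) \<in> Pairs M \<times> ?T" using P T by blast
      qed
    qed
  qed
  have "card (f ` (Pairs M \<times> ?T)) = card (Pairs M \<times> ?T)" by (rule card_image[OF inj])
  then have "card ?X = card (Pairs M \<times> ?T)" unfolding img .
  also have "\<dots> = 2 * M * card ?T" by (simp add: card_cartesian_product card_Pairs)
  finally show ?thesis unfolding cnt_def .
qed

lemma map_eq_rep: "map f w = replicate n x \<longleftrightarrow> length w = n \<and> (\<forall>c\<in>set w. f c = x)"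
proof
  assume a: "map f w = replicate n x"
  then have "length w = n" by (metis length_map length_replicate)
  moreover have "f c = x" if "c \<in> set w" for c
  proof -
    have "f c \<in> set (map f w)" using that by simp
    then show ?thesis using a by (simp split: if_splits)
  qed
  ultimately show "length w = n \<and> (\<forall>c\<in>set w. f c = x)" by blast
next
  assume "length w = n \<and> (\<forall>c\<in>set w. f c = x)"
  then show "map f w = replicate n x" by (intro replicate_eqI) auto
qed

lemma cnt_allT: "cnt M (replicate n True) = 2 ^ n"
proof -
  have "{w. set w \<subseteq> alphabet M \<and> cond M w \<and> map isO w = replicate n True}
      = {w. set w \<subseteq> {Lam, Xi} \<and> length w = n}"
  proof (intro set_eqI iffI)
    fix w assume "w \<in> {w. set w \<subseteq> alphabet M \<and> cond M w \<and> map isO w = replicate n True}"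
    then show "w \<in> {w. set w \<subseteq> {Lam, Xi} \<and> length w = n}"
      by (auto simp: map_eq_rep isO_def)
  next
    fix w assume w: "w \<in> {w. set w \<subseteq> {Lam, Xi} \<and> length w = n}"
    then have a: "\<forall>c\<in>set w. isO c" by (auto simp: isO_def)
    then have "cond M w" by (rule cond_allO)
    then show "w \<in> {w. set w \<subseteq> alphabet M \<and> cond M w \<and> map isO w = replicate n True}"
      using a w isO_alpha by (auto simp: map_eq_rep)
  qed
  then show ?thesis unfolding cnt_def by (simp add: card_lists_length_eq numeral_2_eq_2)
qed

lemma cnt_allF: "cnt M (replicate n False) = (2 * M) ^ n"
proof -
  let ?C = "Rho ` {1..M} \<union> Eta ` {1..M}"
  have r: "card (Rho ` {1..M}) = M" by (simp add: card_image inj_on_def)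
  have e: "card (Eta ` {1..M}) = M" by (simp add: card_image inj_on_def)
  have "card ?C = card (Rho ` {1..M}) + card (Eta ` {1..M})" by (rule card_Un_disjoint) auto
  then have cC: "card ?C = 2 * M" using r e by simp
  have "{w. set w \<subseteq> alphabet M \<and> cond M w \<and> map isO w = replicate n False}
      = {w. set w \<subseteq> ?C \<and> length w = n}"
  proof (intro set_eqI iffI)
    fix w assume "w \<in> {w. set w \<subseteq> alphabet M \<and> cond M w \<and> map isO w = replicate n False}"
    then show "w \<in> {w. set w \<subseteq> ?C \<and> length w = n}"
      by (auto simp: map_eq_rep isO_def alphabet_def)
  next
    fix w assume "w \<in> {w. set w \<subseteq> ?C \<and> length w = n}"
    then show "w \<in> {w. set w \<subseteq> alphabet M \<and> cond M w \<and> map isO w = replicate n False}"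
      using cond_allC[of w M] by (auto simp: map_eq_rep isO_def alphabet_def)
  qed
  then show ?thesis unfolding cnt_def using cC by (simp add: card_lists_length_eq)
qed


lemma pattern_cases: "(\<exists>a b. \<pi> = a @ [True, False] @ b) \<or> (\<exists>d u. \<pi> = replicate d False @ replicate u True)"
proof (induction \<pi>)
  case Nil
  then show ?case by (metis append_Nil replicate_0)
next
  case (Cons x \<pi>)
  then show ?case
  proof
    assume "\<exists>a b. \<pi> = a @ [True, False] @ b"
    then obtain a b where "\<pi> = a @ [True, False] @ b" by blast
    then have "x # \<pi> = (x # a) @ [True, False] @ b" by simp
    then show ?case by blast
  next
    assume "\<exists>d u. \<pi> = replicate d False @ replicate u True"
    then obtain d u where du: "\<pi> = replicate d False @ replicate u True" by blast
    show ?case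
    proof (cases x)
      case False
      then have "x # \<pi> = replicate (Suc d) False @ replicate u True" using du by simp
      then show ?thesis by blast
    next
      case True
      show ?thesis
      proof (cases d)
        case 0
        then have "x # \<pi> = replicate 0 False @ replicate (Suc u) True" using du True by simp
        then show ?thesis by blast
      next
        case (Suc d')
        then have "x # \<pi> = [] @ [True, False] @ (replicate d' False @ replicate u True)" using du True by simp
        then show ?thesis by blast
      qed
    qed
  qed
qed

definition nT :: "bool list \<Rightarrow> nat" where "nT \<pi> = length (filter id \<pi>)"
definition nF :: "bool list \<Rightarrow> nat" where "nF \<pi> = length (filter Not \<pi>)"

definition W :: "nat \<Rightarrow> bool list \<Rightarrow> nat" where
  "W M \<pi> = 2 ^ max (nT \<pi>) (nF \<pi>) * M ^ nF \<pi>"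

lemma filter_rot: "length (filter P (rotate1 xs)) = length (filter P xs)"
  by (cases xs) auto

lemma W_pair: "W M (a @ [True, False] @ b) = 2 * M * W M (a @ b)"
proof -
  have t: "nT (a @ [True, False] @ b) = Suc (nT (a @ b))" by (simp add: nT_def)
  have f: "nF (a @ [True, False] @ b) = Suc (nF (a @ b))" by (simp add: nF_def)
  show ?thesis unfolding W_def t f by (simp add: power_Suc mult_ac)
qed

lemma cnt_W: "cnt M \<pi> = W M \<pi>"
proof (induction "length \<pi>" arbitrary: \<pi> rule: less_induct)
  case less
  have adj: "cnt M \<sigma> = W M \<sigma>" if "\<sigma> = a @ [True, False] @ b" "length \<sigma> = length \<pi>" for \<sigma> a b
  proof -
    have "length (a @ b) < length \<pi>" using that by simp
    then have "cnt M (a @ b) = W M (a @ b)" using less by blast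
    then show ?thesis using that cnt_pair W_pair by simp
  qed
  from pattern_cases[of \<pi>] show ?case
  proof
    assume "\<exists>a b. \<pi> = a @ [True, False] @ b"
    then show ?thesis using adj by blast
  next
    assume "\<exists>d u. \<pi> = replicate d False @ replicate u True"
    then obtain d u where du: "\<pi> = replicate d False @ replicate u True" by blast
    show ?thesis
    proof (cases "d = 0")
      case True
      then show ?thesis using du cnt_allT by (simp add: W_def nT_def nF_def)
    next
      case dF: False
      show ?thesis
      proof (cases "u = 0")
        case True
        then show ?thesis using du cnt_allF by (simp add: W_def nT_def nF_def power_mult_distrib)
      next
        case False
        obtain d' u' where d': "d = Suc d'" "u = Suc u'" using dF False by (metis not0_implies_Suc)
        have r: "rotate1 \<pi> = (replicate d' False @ replicate u' True) @ [True, False] @ []"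
          using du d' by (simp add: replicate_append_same)
        have "cnt M \<pi> = cnt M (rotate1 \<pi>)" by (simp add: cnt_rot)
        also have "\<dots> = W M (rotate1 \<pi>)" by (rule adj[OF r]) simp
        also have "\<dots> = W M \<pi>"
          by (simp add: W_def nT_def nF_def filter_rot)
        finally show ?thesis .
      qed
    qed
  qed
qed

definition ppn :: "nat \<Rightarrow> nat \<Rightarrow> nat \<Rightarrow> nat" where
  "ppn a b n = (\<Sum>k\<le>n. if n \<le> 2 * k then (n choose k) * a ^ k * b ^ (n - k) else 0)"

definition tt :: "complex \<Rightarrow> complex \<Rightarrow> nat \<Rightarrow> nat \<Rightarrow> complex" where
  "tt A B n k = (if n \<le> 2 * k then of_nat (n choose k) * A ^ k * B ^ (n - k) else 0)"

definition cc :: "complex \<Rightarrow> complex \<Rightarrow> nat \<Rightarrow> complex" where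
  "cc A B n = (if even n then of_nat (n choose (n div 2)) * (A * B) ^ (n div 2) else 0)"

lemma ppn_tt: "of_nat (ppn a b n) = (\<Sum>k\<le>n. tt (of_nat a) (of_nat b) n k)"
  unfolding ppn_def tt_def of_nat_sum by (intro sum.cong) auto

lemma sum_delta_pred: "finite S \<Longrightarrow> (\<Sum>k\<in>S. if P k then f k else 0) = (\<Sum>k\<in>{k\<in>S. P k}. f k)"
  by (simp add: sum.inter_filter)

lemma cc_sum: "(\<Sum>k\<le>n. if n = 2 * k then of_nat (n choose k) * A ^ k * B ^ (n - k) else 0) = cc A B n"
proof (cases "even n")
  case True
  then obtain m where m: "n = 2 * m" by blast
  have "(\<Sum>k\<le>n. if n = 2 * k then of_nat (n choose k) * A ^ k * B ^ (n - k) else 0)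
      = (\<Sum>k\<le>n. if k = m then of_nat (n choose k) * A ^ k * B ^ (n - k) else 0)"
    using m by (intro sum.cong) auto
  also have "\<dots> = of_nat (n choose m) * A ^ m * B ^ (n - m)" using m by (simp add: sum.delta)
  also have "\<dots> = cc A B n" using m by (simp add: cc_def power_mult_distrib mult_2)
  finally show ?thesis .
next
  case False
  then show ?thesis by (auto simp: cc_def intro!: sum.neutral)
qed

lemma odd_sum: "(\<Sum>k\<le>n. if n = 2 * k + 1 then of_nat (n choose k) * A ^ Suc k * B ^ (n - k) else 0) = cc A B (Suc n) / 2"
proof (cases "odd n")
  case True
  then obtain m where m: "n = 2 * m + 1" by (metis oddE)
  have "(\<Sum>k\<le>n. if n = 2 * k + 1 then of_nat (n choose k) * A ^ Suc k * B ^ (n - k) else 0)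
      = (\<Sum>k\<le>n. if k = m then of_nat (n choose k) * A ^ Suc k * B ^ (n - k) else 0)"
    using m by (intro sum.cong) auto
  also have "\<dots> = of_nat (n choose m) * A ^ Suc m * B ^ (n - m)" using m by (simp add: sum.delta)
  also have "\<dots> = of_nat (n choose m) * (A * B) ^ Suc m" using m by (simp add: power_mult_distrib)
  also have "\<dots> = cc A B (Suc n) / 2"
  proof -
    have sn: "Suc n = 2 * Suc m" using m by simp
    have "(Suc n choose (Suc m)) = (n choose m) + (n choose (Suc m))" using m by simp
    moreover have "(n choose (Suc m)) = (n choose m)"
      using m binomial_symmetric[of "Suc m" n] by simp
    ultimately have "(Suc n choose (Suc m)) = 2 * (n choose m)" by simp
    then show ?thesis using sn by (simp add: cc_def)
  qed
  finally show ?thesis .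
next
  case False
  then have "cc A B (Suc n) = 0" by (simp add: cc_def)
  moreover have "(\<Sum>k\<le>n. if n = 2 * k + 1 then of_nat (n choose k) * A ^ Suc k * B ^ (n - k) else 0) = 0"
    using False by (intro sum.neutral) auto
  ultimately show ?thesis by simp
qed

lemma ppn_rec:
  "(\<Sum>k\<le>Suc n. tt A B (Suc n) k) = (A + B) * (\<Sum>k\<le>n. tt A B n k) + cc A B (Suc n) / 2 - B * cc A B n"
proof -
  define X where "X k = (if n \<le> 2 * k + 1 then of_nat (n choose k) * A ^ Suc k * B ^ (n - k) else 0)" for k
  define Y where "Y k = (if n \<le> 2 * k + 1 then of_nat (n choose (Suc k)) * A ^ Suc k * B ^ (n - k) else 0)" for k
  have S1: "(\<Sum>k\<le>Suc n. tt A B (Suc n) k) = (\<Sum>k\<le>n. tt A B (Suc n) (Suc k))"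
    by (subst sum.atMost_Suc_shift) (simp add: tt_def)
  have S2: "tt A B (Suc n) (Suc k) = X k + Y k" for k
    by (simp add: tt_def X_def Y_def algebra_simps)
  have S3: "(\<Sum>k\<le>n. X k) = A * (\<Sum>k\<le>n. tt A B n k) + cc A B (Suc n) / 2"
  proof -
    have "X k = A * tt A B n k + (if n = 2 * k + 1 then of_nat (n choose k) * A ^ Suc k * B ^ (n - k) else 0)" for k
      by (auto simp: X_def tt_def)
    then have "(\<Sum>k\<le>n. X k) = A * (\<Sum>k\<le>n. tt A B n k) +
        (\<Sum>k\<le>n. if n = 2 * k + 1 then of_nat (n choose k) * A ^ Suc k * B ^ (n - k) else 0)"
      by (simp add: sum.distrib sum_distrib_left)
    then show ?thesis using odd_sum by simp
  qed
  have S4: "(\<Sum>k\<le>n. Y k) = B * ((\<Sum>k\<le>n. tt A B n k) - cc A B n)"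
  proof -
    define Z where "Z k = (if Suc n \<le> 2 * k then of_nat (n choose k) * A ^ k * B ^ (Suc n - k) else 0)" for k
    have "(\<Sum>k\<le>Suc n. Z k) = Z 0 + (\<Sum>k\<le>n. Z (Suc k))" by (rule sum.atMost_Suc_shift)
    moreover have "Z 0 = 0" by (simp add: Z_def)
    moreover have "Z (Suc k) = Y k" for k by (simp add: Z_def Y_def)
    ultimately have a: "(\<Sum>k\<le>n. Y k) = (\<Sum>k\<le>Suc n. Z k)" by simp
    have b: "(\<Sum>k\<le>Suc n. Z k) = (\<Sum>k\<le>n. Z k)" by (simp add: Z_def)
    have c: "Z k = B * (tt A B n k - (if n = 2 * k then of_nat (n choose k) * A ^ k * B ^ (n - k) else 0))"
      if "k \<le> n" for k
    proof -
      have "B ^ (Suc n - k) = B * B ^ (n - k)" using that by (simp add: Suc_diff_le)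
      then show ?thesis by (auto simp: Z_def tt_def algebra_simps)
    qed
    have "(\<Sum>k\<le>n. Z k) = (\<Sum>k\<le>n. B * (tt A B n k - (if n = 2 * k then of_nat (n choose k) * A ^ k * B ^ (n - k) else 0)))"
      by (rule sum.cong) (auto simp: c)
    also have "\<dots> = B * ((\<Sum>k\<le>n. tt A B n k) - cc A B n)"
      by (simp add: sum_distrib_left[symmetric] sum_subtractf cc_sum)
    finally show ?thesis using a b by simp
  qed
  show ?thesis using S1 S2 S3 S4 by (simp add: sum.distrib algebra_simps)
qed

lemma finite_Ln: "finite {\<pi> :: bool list. length \<pi> = n}"
  using finite_lists_length_eq[of "UNIV :: bool set" n] by simp

lemma Ln_Suc: "{\<pi> :: bool list. length \<pi> = Suc n} = Cons True ` {\<pi>. length \<pi> = n} \<union> Cons False ` {\<pi>. length \<pi> = n}"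
proof (intro set_eqI iffI)
  fix \<pi> :: "bool list" assume "\<pi> \<in> {\<pi>. length \<pi> = Suc n}"
  then obtain x \<pi>' where "\<pi> = x # \<pi>'" "length \<pi>' = n" by (cases \<pi>) auto
  then show "\<pi> \<in> Cons True ` {\<pi>. length \<pi> = n} \<union> Cons False ` {\<pi>. length \<pi> = n}"
    by (cases x) auto
qed auto

lemma sum_patterns: "(\<Sum>\<pi>\<in>{\<pi>. length \<pi> = n}. F (nT \<pi>)) = (\<Sum>k\<le>n. (n choose k) * F k)"
proof (induction n arbitrary: F)
  case 0
  have "{\<pi> :: bool list. length \<pi> = 0} = {[]}" by auto
  then show ?case by (simp add: nT_def)
next
  case (Suc n)
  let ?L = "{\<pi> :: bool list. length \<pi> = n}"
  have "(\<Sum>\<pi>\<in>{\<pi>. length \<pi> = Suc n}. F (nT \<pi>)) =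
        (\<Sum>\<pi>\<in>Cons True ` ?L. F (nT \<pi>)) + (\<Sum>\<pi>\<in>Cons False ` ?L. F (nT \<pi>))"
    unfolding Ln_Suc by (rule sum.union_disjoint) (auto simp: finite_Ln)
  also have "(\<Sum>\<pi>\<in>Cons True ` ?L. F (nT \<pi>)) = (\<Sum>\<pi>\<in>?L. F (Suc (nT \<pi>)))"
    by (subst sum.reindex) (auto simp: nT_def)
  also have "(\<Sum>\<pi>\<in>Cons False ` ?L. F (nT \<pi>)) = (\<Sum>\<pi>\<in>?L. F (nT \<pi>))"
    by (subst sum.reindex) (auto simp: nT_def)
  also have "(\<Sum>\<pi>\<in>?L. F (Suc (nT \<pi>))) = (\<Sum>k\<le>n. (n choose k) * F (Suc k))"
    using Suc[of "\<lambda>k. F (Suc k)"] by simp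
  also have "(\<Sum>\<pi>\<in>?L. F (nT \<pi>)) = (\<Sum>k\<le>n. (n choose k) * F k)"
    using Suc[of F] by simp
  also have "(\<Sum>k\<le>n. (n choose k) * F (Suc k)) + (\<Sum>k\<le>n. (n choose k) * F k) =
             (\<Sum>k\<le>Suc n. (Suc n choose k) * F k)"
  proof -
    have a: "(\<Sum>k\<le>Suc n. (Suc n choose k) * F k) = F 0 + (\<Sum>k\<le>n. (Suc n choose Suc k) * F (Suc k))"
      by (subst sum.atMost_Suc_shift) simp
    have b: "(\<Sum>k\<le>n. (Suc n choose Suc k) * F (Suc k)) =
        (\<Sum>k\<le>n. (n choose k) * F (Suc k)) + (\<Sum>k\<le>n. (n choose Suc k) * F (Suc k))"
      by (simp add: sum.distrib algebra_simps)
    have c: "(\<Sum>k\<le>n. (n choose k) * F k) = F 0 + (\<Sum>k\<le>n. (n choose Suc k) * F (Suc k))"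
    proof -
      have "(\<Sum>k\<le>Suc n. (n choose k) * F k) = F 0 + (\<Sum>k\<le>n. (n choose Suc k) * F (Suc k))"
        by (subst sum.atMost_Suc_shift) simp
      moreover have "(\<Sum>k\<le>Suc n. (n choose k) * F k) = (\<Sum>k\<le>n. (n choose k) * F k)"
        by simp
      ultimately show ?thesis by simp
    qed
    show ?thesis using a b c by simp
  qed
  finally show ?case .
qed

lemma op_nT: "op w = nT (map isO w)"
  by (simp add: op_def nT_def comp_def)

lemma cl_nF: "set w \<subseteq> alphabet M \<Longrightarrow> cl M w = nF (map isO w)"
proof -
  assume "set w \<subseteq> alphabet M"
  then have "filter (closer M) w = filter (\<lambda>c. \<not> isO c) w"
    using alpha_cases isO_not_closer by (intro filter_cong) blast+
  then show ?thesis by (simp add: cl_def nF_def comp_def)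
qed

lemma nF_eq: "nF \<pi> = length \<pi> - nT \<pi>"
proof -
  have "length (filter id \<pi>) + length (filter (\<lambda>x. \<not> id x) \<pi>) = length \<pi>"
    by (rule sum_length_filter_compl)
  then show ?thesis by (simp add: nF_def nT_def)
qed

lemma card_by_pattern:
  assumes Q: "\<And>w. set w \<subseteq> alphabet M \<Longrightarrow> Q w = R (map isO w)"
  shows "card {w. length w = n \<and> set w \<subseteq> alphabet M \<and> cond M w \<and> Q w}
       = (\<Sum>\<pi>\<in>{\<pi>. length \<pi> = n}. if R \<pi> then W M \<pi> else 0)"
proof -
  let ?S = "{w. length w = n \<and> set w \<subseteq> alphabet M \<and> cond M w \<and> Q w}"
  have finS: "finite ?S"
    by (rule finite_subset[OF _ finite_lists_length_eq[OF finite_alphabet[of M], of n]]) auto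
  have "card ?S = (\<Sum>w\<in>?S. 1)" by simp
  also have "\<dots> = (\<Sum>\<pi>\<in>{\<pi>. length \<pi> = n}. \<Sum>w\<in>{w \<in> ?S. map isO w = \<pi>}. 1)"
    by (rule sum.group[symmetric]) (auto simp: finS finite_Ln)
  also have "\<dots> = (\<Sum>\<pi>\<in>{\<pi>. length \<pi> = n}. if R \<pi> then W M \<pi> else 0)"
  proof (rule sum.cong[OF HOL.refl])
    fix \<pi> :: "bool list" assume "\<pi> \<in> {\<pi>. length \<pi> = n}"
    then have l: "length \<pi> = n" by simp
    have "{w \<in> ?S. map isO w = \<pi>} = (if R \<pi> then {w. set w \<subseteq> alphabet M \<and> cond M w \<and> map isO w = \<pi>} else {})"
      using Q l by (auto dest: arg_cong[where f=length])
    then show "(\<Sum>w\<in>{w \<in> ?S. map isO w = \<pi>}. 1) = (if R \<pi> then W M \<pi> else 0)"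
      using cnt_W[of M \<pi>] by (simp add: cnt_def)
  qed
  finally show ?thesis .
qed

lemma p_plus_ppn: "n > 0 \<Longrightarrow> p_plus M n = ppn (2 * M) 1 n"
proof -
  assume n: "n > 0"
  have "p_plus M n = card {w. length w = n \<and> set w \<subseteq> alphabet M \<and> cond M w \<and> op w \<le> cl M w}"
    by (rule p_plus_words[OF n])
  also have "\<dots> = (\<Sum>\<pi>\<in>{\<pi>. length \<pi> = n}. if nT \<pi> \<le> nF \<pi> then W M \<pi> else 0)"
    by (rule card_by_pattern) (simp add: op_nT cl_nF)
  also have "\<dots> = (\<Sum>\<pi>\<in>{\<pi>. length \<pi> = n}. (\<lambda>t. if t \<le> n - t then 2 ^ (n - t) * M ^ (n - t) else 0) (nT \<pi>))"
    by (rule sum.cong[OF HOL.refl]) (auto simp: W_def nF_eq)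
  also have "\<dots> = (\<Sum>k\<le>n. (n choose k) * (if k \<le> n - k then 2 ^ (n - k) * M ^ (n - k) else 0))"
    by (rule sum_patterns)
  also have "\<dots> = (\<Sum>k\<le>n. (n choose (n - k)) * (if n - (n - k) \<le> n - k then 2 ^ (n - k) * M ^ (n - k) else 0))"
    by (rule sum.cong[OF HOL.refl]) (simp add: binomial_symmetric[symmetric])
  also have "\<dots> = (\<Sum>k\<le>n. (n choose k) * (if n - k \<le> k then 2 ^ k * M ^ k else 0))"
    by (rule sum.reindex_bij_witness[where i="\<lambda>k. n - k" and j="\<lambda>k. n - k"]) auto
  also have "\<dots> = ppn (2 * M) 1 n"
    unfolding ppn_def by (rule sum.cong[OF HOL.refl]) (auto simp: power_mult_distrib)
  finally show ?thesis .
qed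

lemma p_minus_ppn: "n > 0 \<Longrightarrow> p_minus M n = ppn 2 M n"
proof -
  assume n: "n > 0"
  have "p_minus M n = card {w. length w = n \<and> set w \<subseteq> alphabet M \<and> cond M w \<and> cl M w \<le> op w}"
    by (rule p_minus_words[OF n])
  also have "\<dots> = (\<Sum>\<pi>\<in>{\<pi>. length \<pi> = n}. if nF \<pi> \<le> nT \<pi> then W M \<pi> else 0)"
    by (rule card_by_pattern) (simp add: op_nT cl_nF)
  also have "\<dots> = (\<Sum>\<pi>\<in>{\<pi>. length \<pi> = n}. (\<lambda>t. if n - t \<le> t then 2 ^ t * M ^ (n - t) else 0) (nT \<pi>))"
    by (rule sum.cong[OF HOL.refl]) (auto simp: W_def nF_eq)
  also have "\<dots> = (\<Sum>k\<le>n. (n choose k) * (if n - k \<le> k then 2 ^ k * M ^ (n - k) else 0))"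
    by (rule sum_patterns)
  also have "\<dots> = ppn 2 M n"
    unfolding ppn_def by (rule sum.cong[OF HOL.refl]) auto
  finally show ?thesis .
qed

lemma conv_radius_bound:
  fixes c :: "nat \<Rightarrow> complex"
  assumes K: "K > 0" and b: "\<And>n. norm (c n) \<le> K ^ n"
  shows "fps_conv_radius (Abs_fps c) \<ge> ereal (1 / K)"
  unfolding fps_conv_radius_def fps_nth_Abs_fps
proof (rule conv_radius_geI_ex')
  fix r :: real assume r: "0 < r" "ereal r < ereal (1 / K)"
  then have Kr: "K * r < 1" using K by (simp add: field_simps)
  show "summable (\<lambda>n. c n * complex_of_real r ^ n)"
  proof (rule summable_comparison_test)
    show "\<exists>N. \<forall>n\<ge>N. norm (c n * complex_of_real r ^ n) \<le> (K * r) ^ n"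
      using b r by (auto simp: norm_mult norm_power power_mult_distrib intro!: mult_right_mono)
    show "summable (\<lambda>n. (K * r) ^ n)" using Kr K r by (intro summable_geometric) simp
  qed
qed

definition Kc :: "nat \<Rightarrow> nat \<Rightarrow> real" where "Kc a b = 2 * (real a + real b + 1)"

lemma Kc_pos: "Kc a b > 0" by (simp add: Kc_def)

lemma tt_norm: "norm (tt (of_nat a) (of_nat b) n k) \<le> real (n choose k) * real a ^ k * real b ^ (n - k)"
  by (simp add: tt_def norm_mult norm_power)

lemma P_bound: "norm (\<Sum>k\<le>n. tt (of_nat a) (of_nat b) n k) \<le> Kc a b ^ n"
proof -
  have "norm (\<Sum>k\<le>n. tt (of_nat a) (of_nat b) n k) \<le> (\<Sum>k\<le>n. norm (tt (of_nat a) (of_nat b) n k))"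
    by (rule norm_sum)
  also have "\<dots> \<le> (\<Sum>k\<le>n. real (n choose k) * real a ^ k * real b ^ (n - k))"
    by (rule sum_mono) (rule tt_norm)
  also have "\<dots> = (real a + real b) ^ n" by (simp add: binomial_ring)
  also have "\<dots> \<le> Kc a b ^ n" unfolding Kc_def by (rule power_mono) auto
  finally show ?thesis .
qed

lemma cc_bound: "norm (cc (of_nat a) (of_nat b) n) \<le> Kc a b ^ n"
proof (cases "even n")
  case True
  let ?m = "n div 2"
  have "norm (cc (of_nat a) (of_nat b) n) = real (n choose ?m) * (real a * real b) ^ ?m"
    using True by (simp add: cc_def norm_mult norm_power)
  also have "\<dots> \<le> 2 ^ n * (real a + real b + 1) ^ n"
  proof (rule mult_mono)
    show "real (n choose ?m) \<le> 2 ^ n" using binomial_le_pow2[of n ?m] by (simp add: of_nat_le_iff[symmetric])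
    have "real a * real b \<le> (real a + real b + 1) ^ 2" by (simp add: power2_eq_square algebra_simps)
    then have "(real a * real b) ^ ?m \<le> ((real a + real b + 1) ^ 2) ^ ?m" by (rule power_mono) simp
    also have "\<dots> = (real a + real b + 1) ^ (2 * ?m)" by (simp add: power_mult)
    also have "\<dots> \<le> (real a + real b + 1) ^ n" by (rule power_increasing) auto
    finally show "(real a * real b) ^ ?m \<le> (real a + real b + 1) ^ n" .
  qed auto
  also have "\<dots> = Kc a b ^ n" unfolding Kc_def by (simp add: power_mult_distrib[symmetric])
  finally show ?thesis .
next
  case False
  then show ?thesis by (simp add: cc_def Kc_def)
qed

definition Pc :: "nat \<Rightarrow> nat \<Rightarrow> nat \<Rightarrow> complex" where
  "Pc a b n = (\<Sum>k\<le>n. tt (of_nat a) (of_nat b) n k)"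
definition Tf :: "nat \<Rightarrow> nat \<Rightarrow> complex fps" where "Tf a b = Abs_fps (cc (of_nat a) (of_nat b))"
definition Pf :: "nat \<Rightarrow> nat \<Rightarrow> complex fps" where "Pf a b = Abs_fps (Pc a b)"
definition Gf :: "nat \<Rightarrow> nat \<Rightarrow> complex fps" where "Gf a b = Abs_fps (\<lambda>n. Pc a b n / of_nat n)"

lemma rad_Tf: "fps_conv_radius (Tf a b) \<ge> ereal (1 / Kc a b)"
  unfolding Tf_def by (rule conv_radius_bound[OF Kc_pos cc_bound])

lemma rad_Pf: "fps_conv_radius (Pf a b) \<ge> ereal (1 / Kc a b)"
  unfolding Pf_def Pc_def by (rule conv_radius_bound[OF Kc_pos P_bound])

lemma rad_Gf: "fps_conv_radius (Gf a b) \<ge> ereal (1 / Kc a b)"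
  unfolding Gf_def
proof (rule conv_radius_bound[OF Kc_pos])
  fix n
  show "norm (Pc a b n / of_nat n) \<le> Kc a b ^ n"
  proof (cases n)
    case 0
    then show ?thesis by simp
  next
    case (Suc m)
    have "norm (Pc a b n / of_nat n) = norm (Pc a b n) / real n" by (simp add: norm_divide)
    also have "\<dots> \<le> norm (Pc a b n)" using Suc by (simp add: divide_le_eq mult_le_cancel_left1)
    also have "\<dots> \<le> Kc a b ^ n" unfolding Pc_def by (rule P_bound)
    finally show ?thesis .
  qed
qed

lemma rad_deriv: "fps_conv_radius (f :: complex fps) \<ge> R \<Longrightarrow> fps_conv_radius (fps_deriv f) \<ge> R"
  using fps_conv_radius_deriv[of f] by (meson order_trans)

lemma eval_cX:
  fixes f :: "complex fps"
  assumes "norm z < fps_conv_radius f"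
  shows "eval_fps (fps_const c * fps_X ^ k * f) z = c * z ^ k * eval_fps f z"
proof -
  have r: "fps_conv_radius (fps_const c * fps_X ^ k) = \<infinity>"
    by (cases "c = 0") (simp_all add: fps_conv_radius_cmult_left)
  have "eval_fps (fps_const c * fps_X ^ k) z = c * z ^ k"
    by (subst eval_fps_mult) auto
  then show ?thesis using assms r by (simp add: eval_fps_mult)
qed

lemma rad_cX:
  fixes f :: "complex fps"
  shows "fps_conv_radius f \<ge> R \<Longrightarrow> fps_conv_radius (fps_const c * fps_X ^ k * f) \<ge> R"
proof -
  assume a: "fps_conv_radius f \<ge> R"
  have r: "fps_conv_radius (fps_const c * fps_X ^ k) = \<infinity>"
    by (cases "c = 0") (simp_all add: fps_conv_radius_cmult_left)
  have "fps_conv_radius (fps_const c * fps_X ^ k * f) \<ge> min (fps_conv_radius (fps_const c * fps_X ^ k)) (fps_conv_radius f)"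
    by (rule fps_conv_radius_mult)
  then show ?thesis using a r by simp
qed

lemma cX_nth: "fps_nth (fps_const c * fps_X ^ k * f) n = (if n < k then 0 else c * fps_nth f (n - k))"
  by (simp add: mult.assoc fps_X_power_mult_nth)

lemma central: "Suc i * (2 * i + 2 choose Suc i) = 2 * (2 * i + 1) * (2 * i choose i)"
proof -
  have 1: "Suc i * (Suc (2 * i + 1) choose Suc i) = Suc (2 * i + 1) * (2 * i + 1 choose i)"
    by (rule Suc_times_binomial)
  have 2: "Suc i * (Suc (2 * i) choose Suc i) = Suc (2 * i) * (2 * i choose i)"
    by (rule Suc_times_binomial)
  have 3: "(Suc (2 * i) choose Suc i) = (2 * i + 1 choose i)"
    using binomial_symmetric[of "Suc i" "Suc (2 * i)"] by simp
  from 1 have "Suc i * (2 * i + 2 choose Suc i) = 2 * (Suc i * (2 * i + 1 choose i))" by simp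
  also have "Suc i * (2 * i + 1 choose i) = Suc (2 * i) * (2 * i choose i)" using 2 3 by simp
  finally show ?thesis by simp
qed

lemma F1: "fps_deriv (Tf a b) = fps_const (4 * of_nat a * of_nat b) * fps_X ^ 2 * fps_deriv (Tf a b)
   + fps_const (4 * of_nat a * of_nat b) * fps_X ^ 1 * Tf a b"
proof (rule fps_ext)
  fix n
  let ?A = "of_nat a :: complex" and ?B = "of_nat b :: complex"
  show "fps_nth (fps_deriv (Tf a b)) n = fps_nth (fps_const (4 * of_nat a * of_nat b) * fps_X ^ 2 * fps_deriv (Tf a b)
   + fps_const (4 * of_nat a * of_nat b) * fps_X ^ 1 * Tf a b) n"
  proof (cases n)
    case 0
    then show ?thesis by (simp add: Tf_def cc_def cX_nth)
  next
    case (Suc m)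
    have key: "of_nat (m + 2) * cc ?A ?B (m + 2) = 4 * ?A * ?B * (of_nat (m + 1) * cc ?A ?B m)"
    proof (cases "even m")
      case True
      then obtain i where i: "m = 2 * i" by blast
      have "of_nat (m + 2) * cc ?A ?B (m + 2) = of_nat (2 * (Suc i * (2 * i + 2 choose Suc i))) * (?A * ?B) ^ Suc i"
        using i by (simp add: cc_def algebra_simps)
      also have "\<dots> = of_nat (4 * (2 * i + 1) * (2 * i choose i)) * (?A * ?B) ^ Suc i"
      proof -
        have "2 * (Suc i * (2 * i + 2 choose Suc i)) = 2 * (2 * (2 * i + 1) * (2 * i choose i))"
          by (simp only: central)
        also have "\<dots> = 4 * (2 * i + 1) * (2 * i choose i)" by (simp add: algebra_simps)
        finally have "2 * (Suc i * (2 * i + 2 choose Suc i)) = 4 * (2 * i + 1) * (2 * i choose i)" .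
        then show ?thesis by (simp only:)
      qed
      also have "\<dots> = 4 * ?A * ?B * (of_nat (m + 1) * cc ?A ?B m)"
      proof -
        have c: "cc ?A ?B m = of_nat (2 * i choose i) * (?A * ?B) ^ i" using i by (simp add: cc_def)
        show ?thesis unfolding c by (simp add: i power_Suc algebra_simps)
      qed
      finally show ?thesis .
    next
      case False
      then show ?thesis by (simp add: cc_def)
    qed
    show ?thesis
      unfolding fps_add_nth cX_nth using Suc key
      by (cases m) (simp_all add: Tf_def algebra_simps)
  qed
qed


lemma Pc0: "Pc a b 0 = 1" by (simp add: Pc_def tt_def)
lemma Pc1: "Pc a b 1 = of_nat a" by (simp add: Pc_def tt_def)

lemma F2: "Pf a b = 1 + fps_const (of_nat a + of_nat b) * fps_X ^ 1 * Pf a b + fps_const (1/2) * fps_X ^ 0 * Tf a b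
   - fps_const (1/2) - fps_const (of_nat b) * fps_X ^ 1 * Tf a b"
proof (rule fps_ext)
  fix n
  show "fps_nth (Pf a b) n = fps_nth (1 + fps_const (of_nat a + of_nat b) * fps_X ^ 1 * Pf a b + fps_const (1/2) * fps_X ^ 0 * Tf a b
   - fps_const (1/2) - fps_const (of_nat b) * fps_X ^ 1 * Tf a b) n"
  proof (cases n)
    case 0
    then show ?thesis unfolding fps_add_nth fps_sub_nth cX_nth by (simp add: Pf_def Tf_def Pc0 cc_def)
  next
    case (Suc m)
    have "Pc a b (Suc m) = (of_nat a + of_nat b) * Pc a b m + cc (of_nat a) (of_nat b) (Suc m) / 2 - of_nat b * cc (of_nat a) (of_nat b) m"
      unfolding Pc_def by (rule ppn_rec)
    then show ?thesis using Suc unfolding fps_add_nth fps_sub_nth cX_nth by (simp add: Pf_def Tf_def)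
  qed
qed

lemma F3: "fps_const 1 * fps_X ^ 1 * fps_deriv (Gf a b) = Pf a b - 1"
proof (rule fps_ext)
  fix n
  show "fps_nth (fps_const 1 * fps_X ^ 1 * fps_deriv (Gf a b)) n = fps_nth (Pf a b - 1) n"
    unfolding fps_sub_nth cX_nth
    by (cases n) (simp_all add: Pf_def Gf_def Pc0 del: of_nat_Suc)
qed

lemma rad_lt: "norm z < 1 / Kc a b \<Longrightarrow> fps_conv_radius f \<ge> ereal (1 / Kc a b) \<Longrightarrow> ereal (norm z) < fps_conv_radius f"
proof -
  assume a: "norm z < 1 / Kc a b" "fps_conv_radius f \<ge> ereal (1 / Kc a b)"
  have "ereal (norm z) < ereal (1 / Kc a b)" using a(1) by simp
  then show ?thesis using a(2) by (rule less_le_trans)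
qed

lemma rad_add: "x < fps_conv_radius (f :: complex fps) \<Longrightarrow> x < fps_conv_radius g \<Longrightarrow> x < fps_conv_radius (f + g)"
proof -
  assume "x < fps_conv_radius f" "x < fps_conv_radius g"
  then have "x < min (fps_conv_radius f) (fps_conv_radius g)" by simp
  then show ?thesis using fps_conv_radius_add[of f g] by (rule less_le_trans)
qed

lemma rad_diff: "x < fps_conv_radius (f :: complex fps) \<Longrightarrow> x < fps_conv_radius g \<Longrightarrow> x < fps_conv_radius (f - g)"
proof -
  assume "x < fps_conv_radius f" "x < fps_conv_radius g"
  then have "x < min (fps_conv_radius f) (fps_conv_radius g)" by simp
  then show ?thesis using fps_conv_radius_diff[of f g] by (rule less_le_trans)
qed

lemma E_T:
  assumes z: "norm z < 1 / Kc a b"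
  shows "eval_fps (fps_deriv (Tf a b)) z * (1 - 4 * of_nat a * of_nat b * z ^ 2) = 4 * of_nat a * of_nat b * z * eval_fps (Tf a b) z"
proof -
  have r1: "ereal (norm z) < fps_conv_radius (fps_deriv (Tf a b))" using rad_lt[OF z rad_deriv[OF rad_Tf]] .
  have r2: "ereal (norm z) < fps_conv_radius (Tf a b)" using rad_lt[OF z rad_Tf] .
  have r3: "ereal (norm z) < fps_conv_radius (fps_const c * fps_X ^ k * fps_deriv (Tf a b))" for c k
    using rad_lt[OF z rad_cX[OF rad_deriv[OF rad_Tf]]] .
  have r4: "ereal (norm z) < fps_conv_radius (fps_const c * fps_X ^ k * Tf a b)" for c k
    using rad_lt[OF z rad_cX[OF rad_Tf]] .
  have "eval_fps (fps_deriv (Tf a b)) z = eval_fps (fps_const (4 * of_nat a * of_nat b) * fps_X ^ 2 * fps_deriv (Tf a b)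
   + fps_const (4 * of_nat a * of_nat b) * fps_X ^ 1 * Tf a b) z"
    using F1 by metis
  also have "\<dots> = 4 * of_nat a * of_nat b * z ^ 2 * eval_fps (fps_deriv (Tf a b)) z + 4 * of_nat a * of_nat b * z ^ 1 * eval_fps (Tf a b) z"
    by (simp only: eval_fps_add[OF r3 r4] eval_cX[OF r1] eval_cX[OF r2])
  finally show ?thesis by (simp add: algebra_simps)
qed

lemma E_P:
  assumes z: "norm z < 1 / Kc a b"
  shows "eval_fps (Pf a b) z = 1 + (of_nat a + of_nat b) * z * eval_fps (Pf a b) z + eval_fps (Tf a b) z / 2 - 1/2
     - of_nat b * z * eval_fps (Tf a b) z"
proof -
  have r1: "ereal (norm z) < fps_conv_radius (Pf a b)" using rad_lt[OF z rad_Pf] .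
  have r2: "ereal (norm z) < fps_conv_radius (Tf a b)" using rad_lt[OF z rad_Tf] .
  have r3: "ereal (norm z) < fps_conv_radius (fps_const c * fps_X ^ k * Pf a b)" for c k
    using rad_lt[OF z rad_cX[OF rad_Pf]] .
  have r4: "ereal (norm z) < fps_conv_radius (fps_const c * fps_X ^ k * Tf a b)" for c k
    using rad_lt[OF z rad_cX[OF rad_Tf]] .
  have c1: "ereal (norm z) < fps_conv_radius (1 :: complex fps)" by simp
  have c2: "ereal (norm z) < fps_conv_radius (fps_const (e :: complex))" for e by simp
  have r5: "ereal (norm z) < fps_conv_radius (1 + fps_const c * fps_X ^ k * Pf a b)" for c k
    by (rule rad_add[OF c1 r3])
  have r6: "ereal (norm z) < fps_conv_radius (1 + fps_const c * fps_X ^ k * Pf a b + fps_const d * fps_X ^ j * Tf a b)" for c k d j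
    by (rule rad_add[OF r5 r4])
  have r7: "ereal (norm z) < fps_conv_radius (1 + fps_const c * fps_X ^ k * Pf a b + fps_const d * fps_X ^ j * Tf a b - fps_const e)" for c k d j e
    by (rule rad_diff[OF r6 c2])
  have "eval_fps (Pf a b) z = eval_fps (1 + fps_const (of_nat a + of_nat b) * fps_X ^ 1 * Pf a b + fps_const (1/2) * fps_X ^ 0 * Tf a b
   - fps_const (1/2) - fps_const (of_nat b) * fps_X ^ 1 * Tf a b) z"
    using F2 by metis
  also have "\<dots> = 1 + (of_nat a + of_nat b) * z ^ 1 * eval_fps (Pf a b) z + 1/2 * z ^ 0 * eval_fps (Tf a b) z - 1/2
     - of_nat b * z ^ 1 * eval_fps (Tf a b) z"
  proof -
    show ?thesis
      by (simp only: eval_fps_diff[OF r7 r4] eval_fps_diff[OF r6 c2] eval_fps_add[OF r5 r4]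
        eval_fps_add[OF c1 r3] eval_cX[OF r1] eval_cX[OF r2] eval_fps_1 eval_fps_const)
  qed
  finally show ?thesis by simp
qed

lemma E_G:
  assumes z: "norm z < 1 / Kc a b"
  shows "z * eval_fps (fps_deriv (Gf a b)) z = eval_fps (Pf a b) z - 1"
proof -
  have r1: "ereal (norm z) < fps_conv_radius (Pf a b)" using rad_lt[OF z rad_Pf] .
  have r2: "ereal (norm z) < fps_conv_radius (fps_deriv (Gf a b))" using rad_lt[OF z rad_deriv[OF rad_Gf]] .
  have "1 * z ^ 1 * eval_fps (fps_deriv (Gf a b)) z = eval_fps (fps_const 1 * fps_X ^ 1 * fps_deriv (Gf a b)) z"
    by (rule eval_cX[symmetric]) (rule r2)
  also have "\<dots> = eval_fps (Pf a b - 1) z" by (simp only: F3)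
  also have "\<dots> = eval_fps (Pf a b) z - 1" by (simp add: eval_fps_diff r1)
  finally show ?thesis by simp
qed

definition r0 :: "nat \<Rightarrow> nat \<Rightarrow> real" where "r0 a b = 1 / (2 * Kc a b)"

lemma r0_pos: "r0 a b > 0" using Kc_pos[of a b] by (simp add: r0_def)

lemma r0_lt: "norm z < r0 a b \<Longrightarrow> norm z < 1 / Kc a b"
proof -
  assume "norm z < r0 a b"
  moreover have "r0 a b \<le> 1 / Kc a b" using Kc_pos[of a b] by (simp add: r0_def field_simps)
  ultimately show ?thesis by simp
qed

lemma small_z:
  assumes z: "norm z < r0 a b"
  shows "Re (1 - 4 * of_nat a * of_nat b * z ^ 2) > 0"
    and "Re (1 - 2 * of_nat a * z) > 0"
    and "norm ((of_nat a + of_nat b) * z) < 1"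
proof -
  let ?K = "real a + real b + 1"
  have K: "Kc a b = 2 * ?K" by (simp add: Kc_def)
  have nz: "norm z < 1 / (4 * ?K)" using z by (simp add: r0_def K)
  have Kp: "?K > 0" by simp
  have nz2: "norm z * ?K < 1 / 4" using nz Kp by (simp add: field_simps)
  have x0: "?K * norm z < 1 / 4" using nz2 by (simp add: mult.commute)
  have "norm (4 * of_nat a * of_nat b * z ^ 2 :: complex) = 4 * real a * real b * norm z ^ 2"
    by (simp add: norm_mult norm_power)
  also have "\<dots> \<le> 4 * (?K * norm z) * (?K * norm z)"
  proof -
    have "real a * real b \<le> ?K * ?K" by (simp add: algebra_simps)
    then have "4 * real a * real b * norm z ^ 2 \<le> 4 * (?K * ?K) * norm z ^ 2"
      by (intro mult_right_mono) auto
    then show ?thesis by (simp add: power2_eq_square algebra_simps)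
  qed
  also have "\<dots> < 4 * (1/4) * (1/4)"
  proof -
    have x: "?K * norm z < 1/4" using nz2 by (simp add: mult.commute)
    have "?K * norm z * (?K * norm z) < 1/4 * (1/4)"
      using x by (intro mult_strict_mono) auto
    then show ?thesis by simp
  qed
  finally have n1: "norm (4 * of_nat a * of_nat b * z ^ 2 :: complex) < 1 / 4" by simp
  have "Re (4 * of_nat a * of_nat b * z ^ 2) \<le> norm (4 * of_nat a * of_nat b * z ^ 2 :: complex)"
    by (rule complex_Re_le_cmod)
  then show "Re (1 - 4 * of_nat a * of_nat b * z ^ 2) > 0" using n1 by simp
  have "norm (2 * of_nat a * z :: complex) = 2 * real a * norm z" by (simp add: norm_mult)
  also have "\<dots> \<le> 2 * (?K * norm z)"
  proof -
    have "real a * norm z \<le> ?K * norm z" by (intro mult_right_mono) auto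
    then show ?thesis by simp
  qed
  also have "\<dots> < 1" using x0 by linarith
  finally have n2: "norm (2 * of_nat a * z :: complex) < 1" .
  have "Re (2 * of_nat a * z) \<le> norm (2 * of_nat a * z :: complex)" by (rule complex_Re_le_cmod)
  then show "Re (1 - 2 * of_nat a * z) > 0" using n2 by simp
  have "norm ((of_nat a + of_nat b) * z :: complex) = (real a + real b) * norm z"
    by (simp add: norm_mult)
    (metis norm_of_nat of_nat_add of_real_of_nat_eq)
  also have "\<dots> \<le> ?K * norm z" by (intro mult_right_mono) auto
  also have "\<dots> < 1" using x0 by linarith
  finally show "norm ((of_nat a + of_nat b) * z) < 1" .
qed


definition sq :: "nat \<Rightarrow> nat \<Rightarrow> complex \<Rightarrow> complex" where
  "sq a b z = csqrt (1 - 4 * of_nat a * of_nat b * z ^ 2)"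

lemma sq_facts:
  assumes z: "norm z < r0 a b"
  shows "1 - 4 * of_nat a * of_nat b * z ^ 2 \<notin> \<real>\<^sub>\<le>\<^sub>0"
    and "sq a b z \<noteq> 0"
    and "(sq a b z) ^ 2 = 1 - 4 * of_nat a * of_nat b * z ^ 2"
    and "Re (sq a b z) \<ge> 0"
    and "1 - 2 * of_nat a * z + sq a b z \<noteq> 0"
    and "1 - (of_nat a + of_nat b) * z \<noteq> 0"
    and "((\<lambda>z. sq a b z) has_field_derivative (- (8 * of_nat a * of_nat b * z)) / (2 * sq a b z)) (at z within S)"
proof -
  note sm = small_z[OF z]
  show nr: "1 - 4 * of_nat a * of_nat b * z ^ 2 \<notin> \<real>\<^sub>\<le>\<^sub>0"
    using sm(1) by (auto simp: complex_nonpos_Reals_iff)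
  show "(sq a b z) ^ 2 = 1 - 4 * of_nat a * of_nat b * z ^ 2" by (simp add: sq_def)
  have "1 - 4 * of_nat a * of_nat b * z ^ 2 \<noteq> 0" using sm(1) by (metis less_irrefl zero_complex.sel(1))
  then show "sq a b z \<noteq> 0" by (simp add: sq_def)
  show re: "Re (sq a b z) \<ge> 0" unfolding sq_def by (rule Re_csqrt)
  have "Re (1 - 2 * of_nat a * z + sq a b z) > 0" using sm(2) re by simp
  then show "1 - 2 * of_nat a * z + sq a b z \<noteq> 0" by (metis less_irrefl zero_complex.sel(1))
  show "1 - (of_nat a + of_nat b) * z \<noteq> 0"
  proof
    assume "1 - (of_nat a + of_nat b) * z = 0"
    then have "(of_nat a + of_nat b) * z = 1" by simp
    then show False using sm(3) by simp
  qed
  have d: "((\<lambda>z. 1 - 4 * of_nat a * of_nat b * z ^ 2) has_field_derivative - (8 * of_nat a * of_nat b * z)) (at z within S)"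
    by (auto intro!: derivative_eq_intros simp: algebra_simps)
  show "((\<lambda>z. sq a b z) has_field_derivative (- (8 * of_nat a * of_nat b * z)) / (2 * sq a b z)) (at z within S)"
    unfolding sq_def by (rule has_field_derivative_csqrt'[OF d nr])
qed

lemma Ts:
  assumes z: "norm z < r0 a b"
  shows "eval_fps (Tf a b) z * sq a b z = 1"
proof -
  let ?S = "ball 0 (r0 a b) :: complex set"
  let ?f = "\<lambda>z. eval_fps (Tf a b) z * sq a b z"
  have "\<exists>c. \<forall>x\<in>?S. ?f x = c"
  proof (rule has_field_derivative_zero_constant)
    show "convex ?S" by simp
  next
    fix x assume x: "x \<in> ?S"
    then have xn: "norm x < r0 a b" by simp
    have xr: "norm x < 1 / Kc a b" using r0_lt[OF xn] .
    have r: "ereal (norm x) < fps_conv_radius (Tf a b)" using rad_lt[OF xr rad_Tf] .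
    note sf = sq_facts[OF xn]
    have "(?f has_field_derivative eval_fps (Tf a b) x * ((- (8 * of_nat a * of_nat b * x)) / (2 * sq a b x)) + eval_fps (fps_deriv (Tf a b)) x * sq a b x) (at x within ?S)"
      by (rule DERIV_mult'[OF has_field_derivative_eval_fps[OF r] sf(7)])
    moreover have "eval_fps (Tf a b) x * ((- (8 * of_nat a * of_nat b * x)) / (2 * sq a b x)) + eval_fps (fps_deriv (Tf a b)) x * sq a b x = 0"
    proof -
      have e: "eval_fps (fps_deriv (Tf a b)) x * (1 - 4 * of_nat a * of_nat b * x ^ 2) = 4 * of_nat a * of_nat b * x * eval_fps (Tf a b) x"
        by (rule E_T[OF xr])
      have "eval_fps (Tf a b) x * ((- (8 * of_nat a * of_nat b * x)) / (2 * sq a b x)) + eval_fps (fps_deriv (Tf a b)) x * sq a b x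
          = (eval_fps (fps_deriv (Tf a b)) x * (sq a b x) ^ 2 - 4 * of_nat a * of_nat b * x * eval_fps (Tf a b) x) / sq a b x"
        using sf(2) by (simp add: field_simps power2_eq_square)
      also have "\<dots> = 0" using e sf(3) by simp
      finally show ?thesis .
    qed
    ultimately show "(?f has_field_derivative 0) (at x within ?S)" by simp
  qed
  then obtain c where c: "\<forall>x\<in>?S. ?f x = c" by blast
  have "?f 0 = 1" by (simp add: eval_fps_at_0 Tf_def cc_def sq_def)
  then have "c = 1" using c r0_pos[of a b] by force
  then show ?thesis using c z by simp
qed


lemma key_alg:
  fixes A B z s P T D :: complex
  assumes s2: "s ^ 2 = 1 - 4 * A * B * z ^ 2" and s0: "s \<noteq> 0" and Q: "1 - (A + B) * z \<noteq> 0"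
    and z0: "z \<noteq> 0" and Ts: "T * s = 1"
    and P: "P = 1 + (A + B) * z * P + T / 2 - 1 / 2 - B * z * T" and D: "z * D = P - 1"
  shows "D * (1 - 2 * A * z + s) = 2 * A + 4 * A * B * z / s"
proof -
  let ?Q = "1 - (A + B) * z"
  have h1: "2 * s * ?Q * P = s + 1 - 2 * B * z"
  proof -
    have "P * ?Q = 1/2 + T / 2 - B * z * T" using P by (simp add: algebra_simps)
    then have "2 * s * (P * ?Q) = 2 * s * (1/2 + T / 2 - B * z * T)" by simp
    also have "\<dots> = s + T * s - 2 * B * z * (T * s)" by (simp add: algebra_simps)
    finally show ?thesis using Ts by (simp add: algebra_simps)
  qed
  have h2: "(1 - s - 2 * B * z + 2 * (A + B) * z * s) * (1 - 2 * A * z + s) = 4 * A * z * (s + 2 * B * z) * ?Q"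
  proof -
    have "(1 - s - 2 * B * z + 2 * (A + B) * z * s) * (1 - 2 * A * z + s) - 4 * A * z * (s + 2 * B * z) * ?Q
       = (s ^ 2 - (1 - 4 * A * B * z ^ 2)) * (2 * (A + B) * z - 1)"
      by algebra
    then show ?thesis using s2 by simp
  qed
  have h3: "2 * ?Q * (s * (z * D) * (1 - 2 * A * z + s)) = 2 * ?Q * (z * (2 * A * s + 4 * A * B * z))"
    unfolding D using h1 h2 by algebra
  have "s * (z * D) * (1 - 2 * A * z + s) = z * (2 * A * s + 4 * A * B * z)"
    using h3 Q by simp
  then have "(D * (1 - 2 * A * z + s) * s) * z = (2 * A * s + 4 * A * B * z) * z"
    by (simp add: algebra_simps)
  then have "D * (1 - 2 * A * z + s) * s = 2 * A * s + 4 * A * B * z"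
    using z0 mult_right_cancel by blast
  then show ?thesis using s0 by (simp add: field_simps)
qed


lemma deriv_identity:
  assumes x: "norm x < r0 a b"
  shows "eval_fps (fps_deriv (Gf a b)) x * (1 - 2 * of_nat a * x + sq a b x) = 2 * of_nat a + 4 * of_nat a * of_nat b * x / sq a b x"
proof (cases "x = 0")
  case True
  have "eval_fps (fps_deriv (Gf a b)) 0 = of_nat a" using Pc1[of a b] by (simp add: eval_fps_at_0 Gf_def)
  moreover have "sq a b 0 = 1" by (simp add: sq_def)
  ultimately show ?thesis using True by simp
next
  case False
  have xr: "norm x < 1 / Kc a b" using r0_lt[OF x] .
  note sf = sq_facts[OF x]
  show ?thesis
    by (rule key_alg[OF sf(3) sf(2) sf(6) False Ts[OF x] E_P[OF xr] E_G[OF xr]])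
qed

lemma expG:
  assumes z: "norm z < r0 a b"
  shows "exp (eval_fps (Gf a b) z) = 2 / (1 - 2 * of_nat a * z + sq a b z)"
proof -
  let ?S = "ball 0 (r0 a b) :: complex set"
  let ?f = "\<lambda>z. exp (eval_fps (Gf a b) z) * (1 - 2 * of_nat a * z + sq a b z)"
  have "\<exists>c. \<forall>x\<in>?S. ?f x = c"
  proof (rule has_field_derivative_zero_constant)
    show "convex ?S" by simp
  next
    fix x assume x: "x \<in> ?S"
    then have xn: "norm x < r0 a b" by simp
    have xr: "norm x < 1 / Kc a b" using r0_lt[OF xn] .
    have r: "ereal (norm x) < fps_conv_radius (Gf a b)" using rad_lt[OF xr rad_Gf] .
    note sf = sq_facts[OF xn]
    let ?D = "eval_fps (fps_deriv (Gf a b)) x"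
    have d1: "((\<lambda>z. exp (eval_fps (Gf a b) z)) has_field_derivative exp (eval_fps (Gf a b) x) * ?D) (at x within ?S)"
      using DERIV_fun_exp[OF has_field_derivative_eval_fps[OF r]] by (rule has_field_derivative_at_within)
    have d2a: "((\<lambda>z. 1 - 2 * of_nat a * z) has_field_derivative - (2 * of_nat a)) (at x within ?S)"
      by (auto intro!: derivative_eq_intros)
    have d2: "((\<lambda>z. 1 - 2 * of_nat a * z + sq a b z) has_field_derivative
        - (2 * of_nat a) + (- (8 * of_nat a * of_nat b * x)) / (2 * sq a b x)) (at x within ?S)"
      by (rule DERIV_add[OF d2a sf(7)])
    have "(?f has_field_derivative exp (eval_fps (Gf a b) x) * (- (2 * of_nat a) + (- (8 * of_nat a * of_nat b * x)) / (2 * sq a b x))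
        + exp (eval_fps (Gf a b) x) * ?D * (1 - 2 * of_nat a * x + sq a b x)) (at x within ?S)"
      by (rule DERIV_mult'[OF d1 d2])
    moreover have "exp (eval_fps (Gf a b) x) * (- (2 * of_nat a) + (- (8 * of_nat a * of_nat b * x)) / (2 * sq a b x))
        + exp (eval_fps (Gf a b) x) * ?D * (1 - 2 * of_nat a * x + sq a b x) = 0"
    proof -
      let ?E = "exp (eval_fps (Gf a b) x)" and ?g = "1 - 2 * of_nat a * x + sq a b x"
        and ?q = "4 * of_nat a * of_nat b * x / sq a b x"
      have h: "?D * ?g = 2 * of_nat a + ?q"
        by (rule deriv_identity[OF xn])
      have h2: "(- (8 * of_nat a * of_nat b * x)) / (2 * sq a b x) = - ?q"
        by simp
      have "?E * (- (2 * of_nat a) + (- (8 * of_nat a * of_nat b * x)) / (2 * sq a b x)) + ?E * ?D * ?g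
          = ?E * (?D * ?g - (2 * of_nat a + ?q))"
        unfolding h2 by (simp add: algebra_simps)
      also have "\<dots> = 0" using h by simp
      finally show ?thesis .
    qed
    ultimately show "(?f has_field_derivative 0) (at x within ?S)" by simp
  qed
  then obtain c where c: "\<forall>x\<in>?S. ?f x = c" by blast
  have "?f 0 = 2" by (simp add: eval_fps_at_0 Gf_def sq_def)
  moreover have "(0::complex) \<in> ?S" using r0_pos[of a b] by simp
  ultimately have "c = 2" using c by metis
  then have "?f z = 2" using c z by simp
  then show ?thesis using sq_facts(5)[OF z] by (simp add: field_simps)
qed

lemma analytic_main:
  "\<exists>r>0. \<forall>z::complex. norm z < r \<longrightarrow>
     summable (\<lambda>n. of_nat (ppn a b (Suc n)) / of_nat (Suc n) * z ^ Suc n) \<and>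
     exp (\<Sum>n. of_nat (ppn a b (Suc n)) / of_nat (Suc n) * z ^ Suc n)
       = 2 / (1 - 2 * of_nat a * z + csqrt (1 - 4 * of_nat a * of_nat b * z ^ 2))"
proof (intro exI[of _ "r0 a b"] conjI allI impI)
  show "r0 a b > 0" by (rule r0_pos)
next
  fix z :: complex assume z: "norm z < r0 a b"
  have xr: "norm z < 1 / Kc a b" using r0_lt[OF z] .
  have r: "ereal (norm z) < fps_conv_radius (Gf a b)" using rad_lt[OF xr rad_Gf] .
  have s: "(\<lambda>n. fps_nth (Gf a b) n * z ^ n) sums eval_fps (Gf a b) z" by (rule sums_eval_fps[OF r])
  have e: "fps_nth (Gf a b) (Suc n) * z ^ Suc n = of_nat (ppn a b (Suc n)) / of_nat (Suc n) * z ^ Suc n" for n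
    by (simp add: Gf_def Pc_def ppn_tt del: of_nat_Suc)
  have "(\<lambda>n. fps_nth (Gf a b) (Suc n) * z ^ Suc n) sums eval_fps (Gf a b) z"
    using s by (subst sums_Suc_iff) (simp add: Gf_def)
  then have s2: "(\<lambda>n. of_nat (ppn a b (Suc n)) / of_nat (Suc n) * z ^ Suc n) sums eval_fps (Gf a b) z"
    unfolding e .
  then show "summable (\<lambda>n. of_nat (ppn a b (Suc n)) / of_nat (Suc n) * z ^ Suc n)" by (rule sums_summable)
  have "(\<Sum>n. of_nat (ppn a b (Suc n)) / of_nat (Suc n) * z ^ Suc n) = eval_fps (Gf a b) z"
    using s2 by (rule sums_unique[symmetric])
  then show "exp (\<Sum>n. of_nat (ppn a b (Suc n)) / of_nat (Suc n) * z ^ Suc n)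
       = 2 / (1 - 2 * of_nat a * z + csqrt (1 - 4 * of_nat a * of_nat b * z ^ 2))"
    using expG[OF z] by (simp add: sq_def)
qed

theorem proposition3p2:
  fixes M :: nat
  shows "\<exists>r>0. \<forall>z::complex. norm z < r \<longrightarrow>
     summable (\<lambda>n. of_nat (p_plus M (Suc n)) / of_nat (Suc n) * z ^ Suc n) \<and>
     summable (\<lambda>n. of_nat (p_minus M (Suc n)) / of_nat (Suc n) * z ^ Suc n) \<and>
     zeta (p_plus M) z = 2 / (1 - 4 * of_nat M * z + csqrt (1 - 8 * of_nat M * z ^ 2)) \<and>
     zeta (p_minus M) z = 2 / (1 - 4 * z + csqrt (1 - 8 * of_nat M * z ^ 2))"
proof -
  obtain r1 where r1: "r1 > 0" and H1: "\<And>z::complex. norm z < r1 \<Longrightarrow>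
     summable (\<lambda>n. of_nat (ppn (2 * M) 1 (Suc n)) / of_nat (Suc n) * z ^ Suc n) \<and>
     exp (\<Sum>n. of_nat (ppn (2 * M) 1 (Suc n)) / of_nat (Suc n) * z ^ Suc n)
       = 2 / (1 - 2 * of_nat (2 * M) * z + csqrt (1 - 4 * of_nat (2 * M) * of_nat 1 * z ^ 2))"
    using analytic_main[of "2 * M" 1] by blast
  obtain r2 where r2: "r2 > 0" and H2: "\<And>z::complex. norm z < r2 \<Longrightarrow>
     summable (\<lambda>n. of_nat (ppn 2 M (Suc n)) / of_nat (Suc n) * z ^ Suc n) \<and>
     exp (\<Sum>n. of_nat (ppn 2 M (Suc n)) / of_nat (Suc n) * z ^ Suc n)
       = 2 / (1 - 2 * of_nat 2 * z + csqrt (1 - 4 * of_nat 2 * of_nat M * z ^ 2))"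
    using analytic_main[of 2 M] by blast
  have pp: "p_plus M (Suc n) = ppn (2 * M) 1 (Suc n)" for n by (rule p_plus_ppn) simp
  have pm: "p_minus M (Suc n) = ppn 2 M (Suc n)" for n by (rule p_minus_ppn) simp
  show ?thesis
  proof (intro exI[of _ "min r1 r2"] conjI allI impI)
    show "min r1 r2 > 0" using r1 r2 by simp
  next
    fix z :: complex assume z: "norm z < min r1 r2"
    have A: "summable (\<lambda>n. of_nat (ppn (2 * M) 1 (Suc n)) / of_nat (Suc n) * z ^ Suc n) \<and>
     exp (\<Sum>n. of_nat (ppn (2 * M) 1 (Suc n)) / of_nat (Suc n) * z ^ Suc n)
       = 2 / (1 - 2 * of_nat (2 * M) * z + csqrt (1 - 4 * of_nat (2 * M) * of_nat 1 * z ^ 2))"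
      using H1 z by simp
    have B: "summable (\<lambda>n. of_nat (ppn 2 M (Suc n)) / of_nat (Suc n) * z ^ Suc n) \<and>
     exp (\<Sum>n. of_nat (ppn 2 M (Suc n)) / of_nat (Suc n) * z ^ Suc n)
       = 2 / (1 - 2 * of_nat 2 * z + csqrt (1 - 4 * of_nat 2 * of_nat M * z ^ 2))"
      using H2 z by simp
    show "summable (\<lambda>n. of_nat (p_plus M (Suc n)) / of_nat (Suc n) * z ^ Suc n)"
      using A by (simp only: pp)
    show "summable (\<lambda>n. of_nat (p_minus M (Suc n)) / of_nat (Suc n) * z ^ Suc n)"
      using B by (simp only: pm)
    have e1: "2 * of_nat (2 * M) * z = 4 * of_nat M * z" "4 * of_nat (2 * M) * of_nat 1 * z ^ 2 = 8 * of_nat M * z ^ 2"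
      by simp_all
    show "zeta (p_plus M) z = 2 / (1 - 4 * of_nat M * z + csqrt (1 - 8 * of_nat M * z ^ 2))"
      using A unfolding zeta_def by (simp only: pp e1)
    have e2: "2 * of_nat 2 * z = 4 * z" "4 * of_nat 2 * of_nat M * z ^ 2 = 8 * of_nat M * z ^ 2"
      by simp_all
    show "zeta (p_minus M) z = 2 / (1 - 4 * z + csqrt (1 - 8 * of_nat M * z ^ 2))"
      using B unfolding zeta_def by (simp only: pm e2)
  qed
qed

end
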